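(* Let $(G,\mathcal{C})$ be a 2-colored graph, $G=(V,E)$. Then: (i) the extreme rays of the alternating cone $\mathcal{A}(G,\mathcal{C})$ are (the rays spanned by) the characteristic vectors of the alternating cycles and the alternating bicycles in $(G,\mathcal{C})$; (ii) every integral vector in $\mathcal{A}(G,\mathcal{C})$ is a nonnegative integral combination of characteristic vectors of irreducible CAW's; (iii) every $\{0,1\}$-vector in $\mathcal{A}(G,\mathcal{C})$ is a nonnegative integral combination of characteristic vectors of irreducible CAT's; (iv) the characteristic vector of an irreducible CAW is $\{0,1,2\}$-valued.
   Context: Graphs are finite, undirected, may have parallel edges but no loops. A 2-colored graph $(G,\mathcal{C})$ is a graph $G=(V,E)$ with a coloring $\mathcal{C}:E\to\{R,B\}$ (red/blue). The alternating cone $\mathcal{A}(G,\mathcal{C})\subseteq\mathbb{R}^E$ is the set of $x$ with $x(e)\ge0$ for all $e$ and, at every vertex $v$, $\sum_{e\text{ red},\,e\ni v}x(e)=\sum_{e\text{ blue},\,e\ni v}x(e)$. A walk is a sequence $W=(v_0,e_1,v_1,\dots,e_m,v_m)$, $m\ge0$, with $e_j$ having endpoints $v_{j-1},v_j$; its characteristic vector is $\chi(W)=\sum_{i=1}^m\chi(e_i)$, where $\chi(e)$ is the unit vector of $e$ in $\mathbb{R}^E$. $W$ is closed if $v_0=v_m$; a trail if $e_1,\dots,e_m$ are distinct; a path if moreover $v_0,\dots,v_m$ are distinct; a cycle if closed, edges distinct and $v_0,\dots,v_{m-1}$ distinct. $W$ is internally alternating if $\mathcal{C}(e_j)\ne\mathcal{C}(e_{j+1})$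 for $j=1,\dots,m-1$; alternating if internally alternating and, when closed, also $\mathcal{C}(e_m)\ne\mathcal{C}(e_1)$. A CAW (resp. CAT) is a closed alternating walk (resp. trail). An (even) alternating cycle is a cycle of even length that is alternating. An odd internally alternating cycle with base $v_0$ is a $v_0$-$v_0$ cycle of odd length that is internally alternating. An alternating bicycle is an alternating walk of the form $W_1*P*W_2*P^R$ where $W_1,W_2$ are odd internally alternating cycles, $P$ is a path between their bases (possibly empty if the bases coincide), the internal vertices of $W_1$, $P$, $W_2$ are disjoint, $*$ denotes concatenation and $P^R$ is the reversal of $P$. A CAW $W$ is irreducible if $\chi(W)\ne\chi(W_1)+\chi(W_2)$ for all CAW's $W_1,W_2$; a CAT $T$ is irreducible if $\chi(T)\ne\chi(T_1)+\chi(T_2)$ for all CAT's $T_1,T_2$. *)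

theory Defs
  imports Complex_Main
begin

datatype color = R | B

text \<open>A 2-colored multigraph without loops: vertex set V, edge set E, each edge e has an
  endpoint set ends e consisting of exactly two vertices of V; col is the red/blue colouring.
  Vectors in R^E are functions 'e => real vanishing outside E.\<close>

definition two_colored_graph :: "'v set \<Rightarrow> 'e set \<Rightarrow> ('e \<Rightarrow> 'v set) \<Rightarrow> ('e \<Rightarrow> color) \<Rightarrow> bool" where
  "two_colored_graph V E ends col \<longleftrightarrow>
     finite V \<and> finite E \<and> (\<forall>e\<in>E. ends e \<subseteq> V \<and> card (ends e) = 2)"

definition alt_cone :: "'v set \<Rightarrow> 'e set \<Rightarrow> ('e \<Rightarrow> 'v set) \<Rightarrow> ('e \<Rightarrow> color) \<Rightarrow> ('e \<Rightarrow> real) set" where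
  "alt_cone V E ends col = {x. (\<forall>e\<in>E. x e \<ge> 0) \<and> (\<forall>e. e \<notin> E \<longrightarrow> x e = 0) \<and>
     (\<forall>v\<in>V. (\<Sum>e\<in>{e\<in>E. v \<in> ends e \<and> col e = R}. x e) = (\<Sum>e\<in>{e\<in>E. v \<in> ends e \<and> col e = B}. x e))}"

definition ray :: "('e \<Rightarrow> real) \<Rightarrow> ('e \<Rightarrow> real) set" where
  "ray x = {(\<lambda>e. t * x e) | t. t \<ge> 0}"

definition spans_extreme_ray :: "('e \<Rightarrow> real) set \<Rightarrow> ('e \<Rightarrow> real) \<Rightarrow> bool" where
  "spans_extreme_ray K x \<longleftrightarrow> x \<in> K \<and> x \<noteq> (\<lambda>e. 0) \<and>
     (\<forall>y z. y \<in> K \<longrightarrow> z \<in> K \<longrightarrow> (\<lambda>e. y e + z e) \<in> ray x \<longrightarrow> y \<in> ray x \<and> z \<in> ray x)"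

text \<open>A walk (v_0,e_1,v_1,...,e_m,v_m) is represented as the pair (vertex list, edge list).\<close>
type_synonym ('v,'e) walk = "'v list \<times> 'e list"

definition walk :: "'v set \<Rightarrow> 'e set \<Rightarrow> ('e \<Rightarrow> 'v set) \<Rightarrow> ('v,'e) walk \<Rightarrow> bool" where
  "walk V E ends W \<longleftrightarrow> length (fst W) = Suc (length (snd W)) \<and> set (fst W) \<subseteq> V \<and>
     (\<forall>j < length (snd W). snd W ! j \<in> E \<and> ends (snd W ! j) = {fst W ! j, fst W ! Suc j})"

definition chi :: "('v,'e) walk \<Rightarrow> 'e \<Rightarrow> real" where
  "chi W = (\<lambda>e. real (count_list (snd W) e))"

definition closed_walk :: "('v,'e) walk \<Rightarrow> bool" where
  "closed_walk W \<longleftrightarrow> hd (fst W) = last (fst W)"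

definition trail :: "('v,'e) walk \<Rightarrow> bool" where
  "trail W \<longleftrightarrow> distinct (snd W)"

definition path :: "('v,'e) walk \<Rightarrow> bool" where
  "path W \<longleftrightarrow> distinct (snd W) \<and> distinct (fst W)"

definition cycle :: "('v,'e) walk \<Rightarrow> bool" where
  "cycle W \<longleftrightarrow> closed_walk W \<and> distinct (snd W) \<and> distinct (butlast (fst W)) \<and> snd W \<noteq> []"

definition int_alternating :: "('e \<Rightarrow> color) \<Rightarrow> ('v,'e) walk \<Rightarrow> bool" where
  "int_alternating col W \<longleftrightarrow> (\<forall>j. Suc j < length (snd W) \<longrightarrow> col (snd W ! j) \<noteq> col (snd W ! Suc j))"

definition alternating :: "('e \<Rightarrow> color) \<Rightarrow> ('v,'e) walk \<Rightarrow> bool" where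
  "alternating col W \<longleftrightarrow> int_alternating col W \<and>
     (closed_walk W \<and> snd W \<noteq> [] \<longrightarrow> col (last (snd W)) \<noteq> col (hd (snd W)))"

definition CAW :: "'v set \<Rightarrow> 'e set \<Rightarrow> ('e \<Rightarrow> 'v set) \<Rightarrow> ('e \<Rightarrow> color) \<Rightarrow> ('v,'e) walk \<Rightarrow> bool" where
  "CAW V E ends col W \<longleftrightarrow> walk V E ends W \<and> closed_walk W \<and> alternating col W \<and> snd W \<noteq> []"

definition CAT :: "'v set \<Rightarrow> 'e set \<Rightarrow> ('e \<Rightarrow> 'v set) \<Rightarrow> ('e \<Rightarrow> color) \<Rightarrow> ('v,'e) walk \<Rightarrow> bool" where
  "CAT V E ends col W \<longleftrightarrow> CAW V E ends col W \<and> trail W"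

definition alt_cycle :: "'v set \<Rightarrow> 'e set \<Rightarrow> ('e \<Rightarrow> 'v set) \<Rightarrow> ('e \<Rightarrow> color) \<Rightarrow> ('v,'e) walk \<Rightarrow> bool" where
  "alt_cycle V E ends col W \<longleftrightarrow> walk V E ends W \<and> cycle W \<and> even (length (snd W)) \<and> alternating col W"

definition odd_ia_cycle :: "'v set \<Rightarrow> 'e set \<Rightarrow> ('e \<Rightarrow> 'v set) \<Rightarrow> ('e \<Rightarrow> color) \<Rightarrow> ('v,'e) walk \<Rightarrow> 'v \<Rightarrow> bool" where
  "odd_ia_cycle V E ends col W v0 \<longleftrightarrow> walk V E ends W \<and> cycle W \<and> odd (length (snd W)) \<and>
     int_alternating col W \<and> hd (fst W) = v0"

definition walk_concat :: "('v,'e) walk \<Rightarrow> ('v,'e) walk \<Rightarrow> ('v,'e) walk" where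
  "walk_concat W1 W2 = (fst W1 @ tl (fst W2), snd W1 @ snd W2)"

definition walk_rev :: "('v,'e) walk \<Rightarrow> ('v,'e) walk" where
  "walk_rev W = (rev (fst W), rev (snd W))"

definition alt_bicycle :: "'v set \<Rightarrow> 'e set \<Rightarrow> ('e \<Rightarrow> 'v set) \<Rightarrow> ('e \<Rightarrow> color) \<Rightarrow> ('v,'e) walk \<Rightarrow> bool" where
  "alt_bicycle V E ends col W \<longleftrightarrow>
     (\<exists>W1 P W2 u w.
        odd_ia_cycle V E ends col W1 u \<and> odd_ia_cycle V E ends col W2 w \<and>
        walk V E ends P \<and> path P \<and> hd (fst P) = u \<and> last (fst P) = w \<and>
        set (fst W1) \<inter> set (fst P) = {u} \<and> set (fst P) \<inter> set (fst W2) = {w} \<and>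
        set (fst W1) \<inter> set (fst W2) \<subseteq> {u} \<inter> {w} \<and>
        W = walk_concat (walk_concat (walk_concat W1 P) W2) (walk_rev P) \<and>
        walk V E ends W \<and> alternating col W)"

definition irreducible_CAW :: "'v set \<Rightarrow> 'e set \<Rightarrow> ('e \<Rightarrow> 'v set) \<Rightarrow> ('e \<Rightarrow> color) \<Rightarrow> ('v,'e) walk \<Rightarrow> bool" where
  "irreducible_CAW V E ends col W \<longleftrightarrow> CAW V E ends col W \<and>
     \<not> (\<exists>W1 W2. CAW V E ends col W1 \<and> CAW V E ends col W2 \<and> chi W = (\<lambda>e. chi W1 e + chi W2 e))"

definition irreducible_CAT :: "'v set \<Rightarrow> 'e set \<Rightarrow> ('e \<Rightarrow> 'v set) \<Rightarrow> ('e \<Rightarrow> color) \<Rightarrow> ('v,'e) walk \<Rightarrow> bool" where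
  "irreducible_CAT V E ends col T \<longleftrightarrow> CAT V E ends col T \<and>
     \<not> (\<exists>T1 T2. CAT V E ends col T1 \<and> CAT V E ends col T2 \<and> chi T = (\<lambda>e. chi T1 e + chi T2 e))"

end

theory Submission
  imports Defs
begin

definition flipc :: "color \<Rightarrow> color" where "flipc c = (if c = R then B else R)"

lemma flipc_neq[simp]: "flipc c \<noteq> c" "c \<noteq> flipc c" by (cases c; simp add: flipc_def)+
lemma neq_flipc: "(a::color) \<noteq> b \<Longrightarrow> b = flipc a" by (cases a; cases b; simp add: flipc_def)
lemma flipc_flipc[simp]: "flipc (flipc c) = c" by (cases c; simp add: flipc_def)

lemma walk_pair: "walk V E ends (vs, es) \<longleftrightarrow> length vs = Suc (length es) \<and> set vs \<subseteq> V \<and>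
     (\<forall>j < length es. es ! j \<in> E \<and> ends (es ! j) = {vs ! j, vs ! Suc j})"
  by (simp add: walk_def)

lemma int_alt_pair: "int_alternating col (vs, es) \<longleftrightarrow> (\<forall>j. Suc j < length es \<longrightarrow> col (es ! j) \<noteq> col (es ! Suc j))"
  by (simp add: int_alternating_def)

lemma walk_take: assumes "walk V E ends (vs, es)" "i \<le> length es"
  shows "walk V E ends (take (Suc i) vs, take i es)"
  using assms unfolding walk_pair by (auto dest: in_set_takeD)

lemma walk_drop: assumes "walk V E ends (vs, es)" "i \<le> length es"
  shows "walk V E ends (drop i vs, drop i es)"
  using assms unfolding walk_pair by (auto dest: in_set_dropD)

lemma walk_concat_pair: "walk_concat (a, b) (c, d) = (a @ tl c, b @ d)"
  by (simp add: walk_concat_def)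

lemma walk_concat: assumes "walk V E ends (vs1, es1)" "walk V E ends (vs2, es2)" "last vs1 = hd vs2"
  shows "walk V E ends (walk_concat (vs1, es1) (vs2, es2))"
proof -
  obtain a vs2' where v2: "vs2 = a # vs2'" using assms(2) unfolding walk_pair by (cases vs2) auto
  have l1: "length vs1 = Suc (length es1)" using assms(1) unfolding walk_pair by auto
  have la: "vs1 ! length es1 = a" using assms(3) l1 v2
    by (metis diff_Suc_1 last_conv_nth length_0_conv list.sel(1) nat.distinct(1))
  show ?thesis unfolding walk_concat_pair walk_pair
  proof (intro conjI)
    show "length (vs1 @ tl vs2) = Suc (length (es1 @ es2))" using assms v2 unfolding walk_pair by auto
    show "set (vs1 @ tl vs2) \<subseteq> V" using assms v2 unfolding walk_pair by auto
    show "\<forall>j<length (es1 @ es2). (es1 @ es2) ! j \<in> E \<and> ends ((es1 @ es2) ! j) = {(vs1 @ tl vs2) ! j, (vs1 @ tl vs2) ! Suc j}"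
    proof (intro allI impI)
    fix j assume j: "j < length (es1 @ es2)"
    show "(es1 @ es2) ! j \<in> E \<and> ends ((es1 @ es2) ! j) = {(vs1 @ tl vs2) ! j, (vs1 @ tl vs2) ! Suc j}"
    proof (cases "j < length es1")
      case True
      then show ?thesis using assms(1) l1 by (auto simp: walk_pair nth_append)
    next
      case False
      then obtain k where k: "j = length es1 + k" "k < length es2" using j by (metis add_diff_inverse_nat length_append nat_add_left_cancel_less)
      have "es2 ! k \<in> E \<and> ends (es2 ! k) = {vs2 ! k, vs2 ! Suc k}" using assms(2) k unfolding walk_pair by auto
      moreover have "(vs1 @ tl vs2) ! j = vs2 ! k"
        using k l1 la v2 by (cases k) (auto simp: nth_append)
      moreover have "(vs1 @ tl vs2) ! Suc j = vs2 ! Suc k"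
        using k l1 v2 by (auto simp: nth_append)
      moreover have "(es1 @ es2) ! j = es2 ! k" using k by (simp add: nth_append)
      ultimately show ?thesis by simp
    qed
  qed
  qed
qed

lemma walk_rev: assumes "walk V E ends (vs, es)" shows "walk V E ends (rev vs, rev es)"
  unfolding walk_pair
proof (intro conjI)
  show "length (rev vs) = Suc (length (rev es))" "set (rev vs) \<subseteq> V" using assms unfolding walk_pair by auto
  show "\<forall>j<length (rev es). rev es ! j \<in> E \<and> ends (rev es ! j) = {rev vs ! j, rev vs ! Suc j}"
  proof (intro allI impI)
  fix j assume j: "j < length (rev es)"
  have l: "length vs = Suc (length es)" using assms unfolding walk_pair by auto
  let ?k = "length es - Suc j"
  have k: "?k < length es" using j by auto
  have "es ! ?k \<in> E \<and> ends (es ! ?k) = {vs ! ?k, vs ! Suc ?k}" using assms k unfolding walk_pair by auto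
  moreover have "rev es ! j = es ! ?k" using j by (simp add: rev_nth)
  moreover have "rev vs ! j = vs ! Suc ?k" using j l by (metis Suc_diff_le Suc_leI less_Suc_eq rev_nth length_rev)
  moreover have "rev vs ! Suc j = vs ! ?k" using j l by (simp add: rev_nth)
  ultimately show "rev es ! j \<in> E \<and> ends (rev es ! j) = {rev vs ! j, rev vs ! Suc j}" by auto
  qed
qed

lemma walk_snoc: assumes "walk V E ends (vs, es)" "f \<in> E" "ends f = {last vs, y}" "y \<in> V"
  shows "walk V E ends (vs @ [y], es @ [f])"
proof -
  have l: "length vs = Suc (length es)" using assms unfolding walk_pair by auto
  have "last vs = vs ! length es" using l by (metis diff_Suc_1 last_conv_nth length_0_conv nat.distinct(1))
  then show ?thesis using assms l unfolding walk_pair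
    by (auto simp: nth_append less_Suc_eq)
qed

lemma chi_concat: "chi (walk_concat W1 W2) e = chi W1 e + chi W2 e"
  by (simp add: chi_def walk_concat_def)

lemma chi_rev: "chi (walk_rev W) = chi W"
  by (simp add: chi_def walk_rev_def)

lemma chi_Cons: "chi (a # vs, f # es) e = chi (vs, es) e + (if f = e then 1 else 0)"
  by (simp add: chi_def)

lemma int_alt_parity: assumes "int_alternating col (vs, es)" "j < length es"
  shows "col (es ! j) = (if even j then col (es ! 0) else flipc (col (es ! 0)))"
  using assms(2)
proof (induction j)
  case 0 then show ?case by simp
next
  case (Suc j)
  then have "col (es ! j) \<noteq> col (es ! Suc j)" using assms(1) unfolding int_alt_pair by auto
  then show ?case using Suc by (auto dest: neq_flipc)
qed

lemma parity_int_alt: assumes "\<And>j. j < length es \<Longrightarrow> col (es ! j) = (if even j then c else flipc c)"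
  shows "int_alternating col (vs, es)"
  unfolding int_alt_pair using assms by (metis Suc_lessD even_Suc flipc_neq(1))

lemma int_alt_append: assumes "int_alternating col (vs1, es1)" "int_alternating col (vs2, es2)"
   "es1 \<noteq> [] \<Longrightarrow> es2 \<noteq> [] \<Longrightarrow> col (last es1) \<noteq> col (hd es2)"
  shows "int_alternating col (vs, es1 @ es2)"
  unfolding int_alt_pair
proof (intro allI impI)
  fix j assume j: "Suc j < length (es1 @ es2)"
  consider "Suc j < length es1" | "Suc j = length es1" | "Suc j > length es1" by linarith
  then show "col ((es1 @ es2) ! j) \<noteq> col ((es1 @ es2) ! Suc j)"
  proof cases
    case 1 then show ?thesis using assms(1) by (simp add: int_alt_pair nth_append)
  next
    case 2
    then have "es1 \<noteq> []" "es2 \<noteq> []" using j by auto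
    moreover have "(es1 @ es2) ! j = last es1" using 2
      by (metis Suc_lessI j diff_Suc_1 last_conv_nth length_0_conv lessI nat.distinct(1) nth_append)
    moreover have "(es1 @ es2) ! Suc j = hd es2" using 2 \<open>es2 \<noteq> []\<close> by (simp add: nth_append hd_conv_nth)
    ultimately show ?thesis using assms(3) by simp
  next
    case 3
    then obtain k where k: "j = length es1 + k" by (metis less_Suc_eq_le le_Suc_ex)
    then show ?thesis using assms(2) j by (simp add: int_alt_pair nth_append)
  qed
qed

lemma int_alt_take: "int_alternating col (vs, es) \<Longrightarrow> int_alternating col (vs', take i es)"
  unfolding int_alt_pair by auto

lemma int_alt_drop: "int_alternating col (vs, es) \<Longrightarrow> int_alternating col (vs', drop i es)"
  unfolding int_alt_pair by auto

lemma int_alt_rev: assumes "int_alternating col (vs, es)" shows "int_alternating col (vs', rev es)"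
  unfolding int_alt_pair
proof (intro allI impI)
  fix j assume j: "Suc j < length (rev es)"
  let ?k = "length es - Suc (Suc j)"
  have "col (es ! ?k) \<noteq> col (es ! Suc ?k)" using assms j unfolding int_alt_pair by auto
  moreover have "rev es ! j = es ! Suc ?k" using j by (simp add: rev_nth Suc_diff_Suc)
  moreover have "rev es ! Suc j = es ! ?k" using j by (simp add: rev_nth)
  ultimately show "col (rev es ! j) \<noteq> col (rev es ! Suc j)" by metis
qed

lemma int_alt_any: "int_alternating col (vs, es) \<longleftrightarrow> int_alternating col (vs', es)"
  unfolding int_alt_pair by simp

lemma alt_even: assumes "alternating col (vs, es)" "closed_walk (vs, es)" "es \<noteq> []"
  shows "even (length es)"
proof (rule ccontr)
  assume "odd (length es)"
  then have "even (length es - 1)" by simp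
  moreover have "int_alternating col (vs, es)" "col (last es) \<noteq> col (hd es)" using assms unfolding alternating_def by auto
  moreover have "last es = es ! (length es - 1)" "hd es = es ! 0" using assms(3) by (auto simp: last_conv_nth hd_conv_nth)
  ultimately show False using int_alt_parity[of col vs es "length es - 1"] assms(3) by simp
qed

locale tcg =
  fixes V :: "'v set" and E :: "'e set" and ends :: "'e \<Rightarrow> 'v set" and col :: "'e \<Rightarrow> color"
  assumes G: "two_colored_graph V E ends col"
begin

lemma finV: "finite V" and finE: "finite E" and endsV: "e \<in> E \<Longrightarrow> ends e \<subseteq> V"
  and card2: "e \<in> E \<Longrightarrow> card (ends e) = 2"
  using G by (auto simp: two_colored_graph_def)

lemma ends2: "e \<in> E \<Longrightarrow> ends e = {a, b} \<Longrightarrow> a \<noteq> b"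
  using card2 by fastforce

lemma walk_neq: "walk V E ends (vs, es) \<Longrightarrow> j < length es \<Longrightarrow> vs ! j \<noteq> vs ! Suc j"
  unfolding walk_pair using ends2 by blast

lemma walk_edge_in: assumes "walk V E ends (vs, es)" "e \<in> set es"
  shows "e \<in> E \<and> ends e \<subseteq> set vs"
proof -
  obtain j where j: "j < length es" "es ! j = e" using assms(2) by (auto simp: in_set_conv_nth)
  have l: "length vs = Suc (length es)" using assms unfolding walk_pair by auto
  then show ?thesis using assms(1) j unfolding walk_pair by (auto simp: nth_mem)
qed

lemma walk_verts: "walk V E ends (vs, es) \<Longrightarrow> set vs \<subseteq> V"
  unfolding walk_pair by auto

definition sg :: "'e \<Rightarrow> real" where "sg e = (if col e = R then 1 else -1)"
definition bal :: "('e \<Rightarrow> real) \<Rightarrow> 'v \<Rightarrow> real" where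
  "bal y v = (\<Sum>e\<in>{e\<in>E. v \<in> ends e}. sg e * y e)"

lemma sg_neq: "col a \<noteq> col b \<Longrightarrow> sg a = - sg b"
  by (cases "col a"; cases "col b"; simp add: sg_def)

lemma sg_eq: "col a = col b \<Longrightarrow> sg a = sg b"
  by (simp add: sg_def)

lemma bal_split: "bal y v = (\<Sum>e\<in>{e\<in>E. v \<in> ends e \<and> col e = R}. y e) - (\<Sum>e\<in>{e\<in>E. v \<in> ends e \<and> col e = B}. y e)"
proof -
  let ?A = "{e\<in>E. v \<in> ends e}" and ?R = "{e\<in>E. v \<in> ends e \<and> col e = R}" and ?B = "{e\<in>E. v \<in> ends e \<and> col e = B}"
  have AU: "?A = ?R \<union> ?B" by (auto intro: color.exhaust)
  have d: "?R \<inter> ?B = {}" by auto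
  have f: "finite ?R" "finite ?B" using finE by auto
  have "bal y v = (\<Sum>e\<in>?R. sg e * y e) + (\<Sum>e\<in>?B. sg e * y e)"
    unfolding bal_def AU using sum.union_disjoint[OF f d] by simp
  also have "(\<Sum>e\<in>?R. sg e * y e) = (\<Sum>e\<in>?R. y e)" by (rule sum.cong) (auto simp: sg_def)
  also have "(\<Sum>e\<in>?B. sg e * y e) = (\<Sum>e\<in>?B. - y e)" by (rule sum.cong) (auto simp: sg_def)
  finally show ?thesis by (simp add: sum_negf)
qed

lemma cone_iff: "y \<in> alt_cone V E ends col \<longleftrightarrow> (\<forall>e\<in>E. 0 \<le> y e) \<and> (\<forall>e. e \<notin> E \<longrightarrow> y e = 0) \<and> (\<forall>v\<in>V. bal y v = 0)"
  by (auto simp: alt_cone_def bal_split)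

lemma bal_add: "bal (\<lambda>e. y e + z e) v = bal y v + bal z v"
  by (simp add: bal_def ring_distribs sum.distrib)

lemma bal_diff: "bal (\<lambda>e. y e - z e) v = bal y v - bal z v"
  by (simp add: bal_def right_diff_distrib sum_subtractf)

lemma bal_scale: "bal (\<lambda>e. t * y e) v = t * bal y v"
  by (simp add: bal_def sum_distrib_left mult.left_commute)

lemma bal_zero: "bal (\<lambda>e. 0) v = 0"
  by (simp add: bal_def)

lemma bal_ind: "f \<in> E \<Longrightarrow> bal (\<lambda>e. if f = e then 1 else 0) v = (if v \<in> ends f then sg f else 0)"
  unfolding bal_def using finE by (simp add: if_distrib[of "\<lambda>x. sg _ * x"] sum.delta cong: if_cong)

lemma chi_Nil: "chi (vs, []) = (\<lambda>e. 0)"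
  by (simp add: chi_def)

lemma bal_chi: "walk V E ends (vs, es) \<Longrightarrow> es \<noteq> [] \<Longrightarrow> int_alternating col (vs, es) \<Longrightarrow>
   bal (chi (vs, es)) v = sg (hd es) * (if hd vs = v then 1 else 0) + sg (last es) * (if last vs = v then 1 else 0)"
proof (induction es arbitrary: vs)
  case Nil then show ?case by simp
next
  case (Cons f es)
  obtain a b vs' where vs: "vs = a # b # vs'" using Cons.prems(1) unfolding walk_pair
    by (metis Suc_length_conv length_Cons)
  have wt: "walk V E ends (b # vs', es)" using walk_drop[OF Cons.prems(1), of 1] vs by simp
  have fE: "f \<in> E" and fe: "ends f = {a, b}" using Cons.prems(1) vs unfolding walk_pair by (auto dest: spec[of _ 0])
  have ab: "a \<noteq> b" using ends2[OF fE fe] .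
  have chi: "chi (vs, f # es) = (\<lambda>e. chi (b # vs', es) e + (if f = e then 1 else 0))"
    using vs by (simp add: chi_Cons fun_eq_iff)
  have bi: "bal (\<lambda>e. if f = e then 1 else 0) v = sg f * (if a = v then 1 else 0) + sg f * (if b = v then 1 else 0)"
    using bal_ind[OF fE] fe ab by auto
  show ?case
  proof (cases "es = []")
    case True
    then have "vs' = []" using Cons.prems(1) vs unfolding walk_pair by simp
    then show ?thesis using True chi bi vs by (simp add: bal_add chi_Nil bal_zero)
  next
    case False
    have ia: "int_alternating col (b # vs', es)" using int_alt_drop[OF Cons.prems(3), of "b # vs'" 1] by simp
    have IH: "bal (chi (b # vs', es)) v = sg (hd es) * (if b = v then 1 else 0) + sg (last es) * (if last (b # vs') = v then 1 else 0)"
      using Cons.IH[OF wt False ia] by simp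
    have "col f \<noteq> col (hd es)" using Cons.prems(3) False unfolding int_alt_pair by (auto simp: hd_conv_nth)
    then have "sg f = - sg (hd es)" by (rule sg_neq)
    then show ?thesis using False chi bi IH vs by (simp add: bal_add)
  qed
qed

lemma CAW_cone: assumes "CAW V E ends col W" shows "chi W \<in> alt_cone V E ends col"
proof -
  obtain vs es where W: "W = (vs, es)" by (cases W)
  have w: "walk V E ends (vs, es)" and cl: "hd vs = last vs" and ne: "es \<noteq> []"
    and ia: "int_alternating col (vs, es)" and wr: "col (last es) \<noteq> col (hd es)"
    using assms W unfolding CAW_def closed_walk_def alternating_def by auto
  have "bal (chi W) v = 0" for v
    using bal_chi[OF w ne ia, of v] sg_neq[OF wr] cl W by simp
  moreover have "e \<notin> E \<Longrightarrow> chi W e = 0" for e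
    using walk_edge_in[OF w] W by (auto simp: chi_def count_list_0_iff)
  moreover have "0 \<le> chi W e" for e by (simp add: chi_def)
  ultimately show ?thesis unfolding cone_iff by auto
qed

lemma chi_sum_len: assumes "walk V E ends (vs, es)" shows "(\<Sum>e\<in>E. chi (vs, es) e) = real (length es)"
proof -
  have "set es \<subseteq> E" using walk_edge_in[OF assms] by auto
  then have "(\<Sum>e\<in>E. count_list es e) = length es" using sum_count_set finE by blast
  then show ?thesis unfolding chi_def by (metis of_nat_sum snd_conv)
qed

lemma cone_scale: "y \<in> alt_cone V E ends col \<Longrightarrow> 0 \<le> t \<Longrightarrow> (\<lambda>e. t * y e) \<in> alt_cone V E ends col"
  unfolding cone_iff by (simp add: bal_scale)

end

lemma distinct_count: "(\<And>x. count_list xs x \<le> 1) \<Longrightarrow> distinct xs"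
proof (induction xs)
  case (Cons a xs)
  have "count_list xs a = 0" using Cons.prems[of a] by simp
  have "count_list xs x \<le> 1" for x
  proof -
    have "count_list xs x \<le> count_list (a # xs) x" by simp
    then show ?thesis using Cons.prems[of x] by linarith
  qed
  then show ?case using Cons.IH \<open>count_list xs a = 0\<close> by (simp add: count_list_0_iff)
qed simp

lemma three_occ: assumes "count_list es e \<ge> 3"
  shows "\<exists>i j k. i < j \<and> j < k \<and> k < length es \<and> es ! i = e \<and> es ! j = e \<and> es ! k = e"
proof -
  define n where "n = count_list es e - 3"
  have n: "count_list es e = Suc (Suc (Suc n))" using assms unfolding n_def by arith
  obtain p1 r1 where 1: "es = p1 @ e # r1" "count_list r1 e = Suc (Suc n)" using count_list_Suc_split_first[OF n] by blast
  obtain p2 r2 where 2: "r1 = p2 @ e # r2" "count_list r2 e = Suc n" using count_list_Suc_split_first[OF 1(2)] by blast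
  obtain p3 r3 where 3: "r2 = p3 @ e # r3" using count_list_Suc_split_first[OF 2(2)] by blast
  let ?i = "length p1" and ?j = "length p1 + Suc (length p2)" and ?k = "length p1 + Suc (length p2) + Suc (length p3)"
  have "es ! ?i = e" "es ! ?j = e" "es ! ?k = e" "?k < length es"
    using 1 2 3 by (simp_all add: nth_append)
  then show ?thesis by (intro exI[of _ ?i] exI[of _ ?j] exI[of _ ?k]) auto
qed

context tcg begin

lemma CAW_split: assumes W: "CAW V E ends col (vs, es)" and ik: "i < k" "k < length es"
  and eq: "es ! i = es ! k" "vs ! i = vs ! k"
  shows "\<exists>W1 W2. CAW V E ends col W1 \<and> CAW V E ends col W2 \<and> chi (vs, es) = (\<lambda>e. chi W1 e + chi W2 e)"
proof -
  have w: "walk V E ends (vs, es)" and cl: "hd vs = last vs" and ne: "es \<noteq> []"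
    and ia: "int_alternating col (vs, es)" and wr: "col (last es) \<noteq> col (hd es)"
    using W unfolding CAW_def closed_walk_def alternating_def by auto
  have l: "length vs = Suc (length es)" using w unfolding walk_pair by auto
  define A where "A = (take (Suc (k - i)) (drop i vs), take (k - i) (drop i es))"
  define B where "B = walk_concat (take (Suc i) vs, take i es) (drop k vs, drop k es)"
  have wA: "walk V E ends A" unfolding A_def
    by (rule walk_take[OF walk_drop[OF w]]) (use ik in auto)
  have wB: "walk V E ends B" unfolding B_def
    apply (rule walk_concat[OF walk_take[OF w] walk_drop[OF w]])
    using ik l eq by (auto simp: take_Suc_conv_app_nth hd_drop_conv_nth)
  have colk: "col (es ! (k - 1)) \<noteq> col (es ! k)" using ia ik unfolding int_alt_pair
    by (metis Suc_pred' gr_implies_not0 not_gr0)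
  have cA: "CAW V E ends col A"
    unfolding CAW_def closed_walk_def alternating_def
  proof (intro conjI impI)
    show "walk V E ends A" by (rule wA)
    have len: "length (take (Suc (k - i)) (drop i vs)) = Suc (k - i)" using ik l by simp
    have "last (take (Suc (k - i)) (drop i vs)) = take (Suc (k - i)) (drop i vs) ! (k - i)"
      using len by (metis diff_Suc_1 last_conv_nth length_0_conv nat.distinct(1))
    also have "\<dots> = vs ! k" using ik l by simp
    finally have "last (take (Suc (k - i)) (drop i vs)) = vs ! k" .
    moreover have "hd (take (Suc (k - i)) (drop i vs)) = vs ! i" using ik l by (simp add: hd_drop_conv_nth)
    ultimately show "hd (fst A) = last (fst A)" using eq unfolding A_def by simp
    show "int_alternating col A" unfolding A_def by (rule int_alt_take, rule int_alt_drop, rule ia)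
    show "snd A \<noteq> []" using ik unfolding A_def by simp
    have lenE: "length (take (k - i) (drop i es)) = k - i" using ik by simp
    have "last (take (k - i) (drop i es)) = take (k - i) (drop i es) ! (k - i - 1)"
      using lenE ik by (metis last_conv_nth length_0_conv zero_less_diff less_irrefl)
    also have "\<dots> = es ! (k - 1)" using ik by simp
    finally have "last (take (k - i) (drop i es)) = es ! (k - 1)" .
    moreover have "hd (take (k - i) (drop i es)) = es ! i" using ik by (simp add: hd_drop_conv_nth)
    ultimately show "col (last (snd A)) \<noteq> col (hd (snd A))" using colk eq unfolding A_def by simp
  qed
  have sB: "snd B = take i es @ drop k es" unfolding B_def walk_concat_def by simp
  have fB: "fst B = take (Suc i) vs @ tl (drop k vs)" unfolding B_def walk_concat_def by simp
  have hdB: "hd (snd B) = hd es"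
  proof (cases "i = 0")
    case True then show ?thesis using sB eq ik by (simp add: hd_drop_conv_nth hd_conv_nth ne)
  next
    case False then show ?thesis using sB ik ne by (cases es) auto
  qed
  have lastB: "last (snd B) = last es" using sB ik by (simp add: last_drop)
  have cB: "CAW V E ends col B"
    unfolding CAW_def closed_walk_def alternating_def
  proof (intro conjI impI)
    show "walk V E ends B" by (rule wB)
    have "length (tl (drop k vs)) = length es - k" using l by simp
    then have "tl (drop k vs) \<noteq> []" using ik by (metis length_0_conv zero_less_diff less_irrefl)
    then have "last (fst B) = last vs" using fB ik l by (simp add: last_drop last_tl)
    moreover have "hd (fst B) = hd vs" using fB l by (cases vs) auto
    ultimately show "hd (fst B) = last (fst B)" using cl by simp
    have "int_alternating col (fst B, take i es @ drop k es)"
    proof (rule int_alt_append[OF int_alt_take[OF ia] int_alt_drop[OF ia]])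
      assume "take i es \<noteq> []" "drop k es \<noteq> []"
      then have "i > 0" by simp
      then obtain i' where "i = Suc i'" using gr0_implies_Suc by blast
      then have "last (take i es) = es ! (i - 1)" using ik by (simp add: take_Suc_conv_app_nth)
      moreover have "hd (drop k es) = es ! i" using ik eq by (simp add: hd_drop_conv_nth)
      moreover have "col (es ! (i - 1)) \<noteq> col (es ! i)" using ia ik \<open>i > 0\<close> unfolding int_alt_pair
        by (metis Suc_pred' less_trans)
      ultimately show "col (last (take i es)) \<noteq> col (hd (drop k es))" by simp
    qed
    then show "int_alternating col B" using sB by (metis prod.collapse)
    show "snd B \<noteq> []" using sB ik by simp
    show "col (last (snd B)) \<noteq> col (hd (snd B))" using hdB lastB wr by simp
  qed
  have es_eq: "es = take i es @ take (k - i) (drop i es) @ drop k es"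
    using ik take_add[of i "k - i" es] by (metis append.assoc append_take_drop_id le_add_diff_inverse less_imp_le)
  have "chi (vs, es) = (\<lambda>e. chi A e + chi B e)"
  proof (rule ext)
    fix e
    have "count_list es e = count_list (take i es) e + count_list (take (k - i) (drop i es)) e + count_list (drop k es) e"
      using arg_cong[where f="\<lambda>l. count_list l e", OF es_eq] by simp
    then show "chi (vs, es) e = chi A e + chi B e" unfolding chi_def A_def sB by simp
  qed
  then show ?thesis using cA cB by blast
qed

lemma irred_CAW_012: assumes "irreducible_CAW V E ends col W" shows "chi W e \<in> {0, 1, 2}"
proof -
  obtain vs es where W: "W = (vs, es)" by (cases W)
  have cW: "CAW V E ends col (vs, es)" using assms W unfolding irreducible_CAW_def by auto
  have w: "walk V E ends (vs, es)" using cW unfolding CAW_def by auto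
  have "count_list es e < 3"
  proof (rule ccontr)
    assume "\<not> count_list es e < 3"
    then obtain i j k where ijk: "i < j" "j < k" "k < length es" "es ! i = e" "es ! j = e" "es ! k = e"
      using three_occ by (meson not_less)
    have lij: "i < length es" "j < length es" using ijk by linarith+
    have ei: "ends e = {vs ! i, vs ! Suc i}" "ends e = {vs ! j, vs ! Suc j}" "ends e = {vs ! k, vs ! Suc k}"
    proof -
      have W3: "\<And>t. t < length es \<Longrightarrow> ends (es ! t) = {vs ! t, vs ! Suc t}" using w unfolding walk_pair by blast
      show "ends e = {vs ! i, vs ! Suc i}" using W3[of i] ijk lij by simp
      show "ends e = {vs ! j, vs ! Suc j}" using W3[of j] ijk lij by simp
      show "ends e = {vs ! k, vs ! Suc k}" using W3[of k] ijk lij by simp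
    qed
    have "\<exists>a b. a < b \<and> b < length es \<and> es ! a = es ! b \<and> vs ! a = vs ! b"
    proof -
      have "vs ! j \<in> {vs ! i, vs ! Suc i}" "vs ! k \<in> {vs ! i, vs ! Suc i}" using ei by blast+
      then consider "vs ! j = vs ! i" | "vs ! k = vs ! i" | "vs ! j = vs ! k" by auto
      then show ?thesis
      proof cases
        case 1 then show ?thesis using ijk lij by (intro exI[of _ i] exI[of _ j]) auto
      next
        case 2 then show ?thesis using ijk lij by (intro exI[of _ i] exI[of _ k]) auto
      next
        case 3 then show ?thesis using ijk lij by (intro exI[of _ j] exI[of _ k]) auto
      qed
    qed
    then obtain a b where "a < b" "b < length es" "es ! a = es ! b" "vs ! a = vs ! b" by blast
    from CAW_split[OF cW this] show False using assms W unfolding irreducible_CAW_def by blast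
  qed
  then have "count_list es e \<in> {0, 1, 2}" by auto
  then show ?thesis using W by (auto simp: chi_def)
qed

end

lemma int_small: "(r::real) \<in> \<int> \<Longrightarrow> 0 \<le> r \<Longrightarrow> r < 1 \<Longrightarrow> r = 0"
  by (auto elim!: Ints_cases)
lemma int_pos: "(r::real) \<in> \<int> \<Longrightarrow> 0 < r \<Longrightarrow> 1 \<le> r"
  by (auto elim!: Ints_cases)
lemma int_nat: "(r::real) \<in> \<int> \<Longrightarrow> 0 \<le> r \<Longrightarrow> \<exists>n. r = real n"
proof (erule Ints_cases)
  fix z assume "0 \<le> r" "r = real_of_int z"
  then have "r = real (nat z)" by simp
  then show "\<exists>n. r = real n" by blast
qed

context tcg begin

lemma other_end: assumes "e \<in> E" "v \<in> ends e" shows "\<exists>y. y \<noteq> v \<and> ends e = {v, y}"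
proof -
  obtain a b where ab: "ends e = {a, b}" "a \<noteq> b" using card2[OF assms(1)] card_2_iff by metis
  then show ?thesis using assms(2) by (cases "v = a") (auto simp: insert_commute)
qed

lemma euler_step:
  assumes x: "x \<in> alt_cone V E ends col" and xi: "\<forall>e. x e \<in> \<int>"
    and w: "walk V E ends (vs, es)" and ne: "es \<noteq> []" and ia: "int_alternating col (vs, es)"
    and le: "\<forall>e. chi (vs, es) e \<le> x e"
    and nc: "\<not> (hd vs = last vs \<and> col (last es) \<noteq> col (hd es))"
  shows "\<exists>f\<in>E. last vs \<in> ends f \<and> col f \<noteq> col (last es) \<and> chi (vs, es) f + 1 \<le> x f"
proof (rule ccontr)
  assume H: "\<not> ?thesis"
  let ?v = "last vs" and ?r = "\<lambda>e. x e - chi (vs, es) e"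
  have vV: "?v \<in> V" using walk_verts[OF w] w unfolding walk_pair by (metis last_in_set length_0_conv nat.distinct(1) subsetD)
  have chiint: "chi (vs, es) e \<in> \<int>" for e by (simp add: chi_def)
  have r0: "?r e = 0" if "e \<in> E" "?v \<in> ends e" "col e \<noteq> col (last es)" for e
  proof -
    have "\<not> chi (vs, es) e + 1 \<le> x e" using H that by blast
    moreover have "?r e \<in> \<int>" using xi chiint by simp
    moreover have "?r e \<ge> 0" using le by simp
    ultimately show ?thesis using int_small by force
  qed
  have "bal ?r ?v = (\<Sum>e\<in>{e\<in>E. ?v \<in> ends e}. sg (last es) * ?r e)"
    unfolding bal_def
  proof (rule sum.cong[OF refl])
    fix e assume "e \<in> {e\<in>E. ?v \<in> ends e}"
    then show "sg e * ?r e = sg (last es) * ?r e"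
      using r0[of e] sg_eq[of e "last es"] by (cases "col e = col (last es)") auto
  qed
  also have "\<dots> = sg (last es) * (\<Sum>e\<in>{e\<in>E. ?v \<in> ends e}. ?r e)" by (simp add: sum_distrib_left)
  finally have b1: "bal ?r ?v = sg (last es) * (\<Sum>e\<in>{e\<in>E. ?v \<in> ends e}. ?r e)" .
  have S0: "(\<Sum>e\<in>{e\<in>E. ?v \<in> ends e}. ?r e) \<ge> 0" using le by (intro sum_nonneg) simp
  have "bal ?r ?v = bal x ?v - bal (chi (vs, es)) ?v" by (rule bal_diff)
  also have "bal x ?v = 0" using x vV unfolding cone_iff by auto
  also have "bal (chi (vs, es)) ?v = sg (hd es) * (if hd vs = ?v then 1 else 0) + sg (last es)"
    using bal_chi[OF w ne ia, of ?v] by simp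
  finally have b2: "bal ?r ?v = - (sg (hd es) * (if hd vs = ?v then 1 else 0) + sg (last es))" by simp
  have sgl: "sg (last es) = 1 \<or> sg (last es) = -1" by (simp add: sg_def)
  show False
  proof (cases "hd vs = ?v")
    case True
    then have "col (last es) = col (hd es)" using nc by auto
    then have "sg (hd es) = sg (last es)" using sg_eq by metis
    then have "sg (last es) * (\<Sum>e\<in>{e\<in>E. ?v \<in> ends e}. ?r e) = - 2 * sg (last es)" using b1 b2 True by simp
    then show False using sgl S0 by auto
  next
    case False
    then have "sg (last es) * (\<Sum>e\<in>{e\<in>E. ?v \<in> ends e}. ?r e) = - sg (last es)" using b1 b2 by simp
    then show False using sgl S0 by auto
  qed
qed

lemma euler:
  assumes x: "x \<in> alt_cone V E ends col" and xi: "\<forall>e. x e \<in> \<int>"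
  shows "walk V E ends (vs, es) \<Longrightarrow> es \<noteq> [] \<Longrightarrow> int_alternating col (vs, es) \<Longrightarrow>
    \<forall>e. chi (vs, es) e \<le> x e \<Longrightarrow> (\<Sum>e\<in>E. x e - chi (vs, es) e) = real n \<Longrightarrow>
    \<exists>W. CAW V E ends col W \<and> (\<forall>e. chi W e \<le> x e)"
proof (induction n arbitrary: vs es rule: less_induct)
  case (less n)
  note w = less.prems(1) and ne = less.prems(2) and ia = less.prems(3) and le = less.prems(4) and sm = less.prems(5)
  show ?case
  proof (cases "hd vs = last vs \<and> col (last es) \<noteq> col (hd es)")
    case True
    then have "CAW V E ends col (vs, es)" using w ne ia unfolding CAW_def closed_walk_def alternating_def by auto
    then show ?thesis using le by blast
  next
    case False
    obtain f where f: "f \<in> E" "last vs \<in> ends f" "col f \<noteq> col (last es)" "chi (vs, es) f + 1 \<le> x f"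
      using euler_step[OF x xi w ne ia le False] by blast
    obtain y where y: "ends f = {last vs, y}" using other_end[OF f(1,2)] by blast
    have yV: "y \<in> V" using endsV[OF f(1)] y by auto
    have w': "walk V E ends (vs @ [y], es @ [f])" by (rule walk_snoc[OF w f(1) y yV])
    have ia': "int_alternating col (vs @ [y], es @ [f])"
      by (rule int_alt_append[OF ia]) (use f(3) in \<open>auto simp: int_alt_pair\<close>)
    have chi': "chi (vs @ [y], es @ [f]) e = chi (vs, es) e + (if f = e then 1 else 0)" for e
      by (simp add: chi_def)
    have le': "\<forall>e. chi (vs @ [y], es @ [f]) e \<le> x e" using le f(4) chi' by auto
    have "(\<Sum>e\<in>E. x e - chi (vs @ [y], es @ [f]) e) = (\<Sum>e\<in>E. (x e - chi (vs, es) e) - (if f = e then 1 else 0))"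
      using chi' by (simp add: algebra_simps)
    also have "\<dots> = real n - 1" using sm f(1) finE by (simp add: sum_subtractf)
    finally have a: "(\<Sum>e\<in>E. x e - chi (vs @ [y], es @ [f]) e) = real n - 1" .
    have sm': "(\<Sum>e\<in>E. x e - chi (vs @ [y], es @ [f]) e) = real (n - 1)"
    proof -
      have "(\<Sum>e\<in>E. x e - chi (vs @ [y], es @ [f]) e) \<ge> 0" using le' by (intro sum_nonneg) simp
      then have "n \<ge> 1" using a by simp
      then show ?thesis using a by (simp add: of_nat_diff)
    qed
    have "n - 1 < n"
    proof -
      have "(\<Sum>e\<in>E. x e - chi (vs @ [y], es @ [f]) e) \<ge> 0" using le' by (intro sum_nonneg) simp
      then show ?thesis using a by simp
    qed
    show ?thesis by (rule less.IH[OF \<open>n - 1 < n\<close> w' _ ia' le' sm']) simp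
  qed
qed

lemma exists_CAW_below:
  assumes x: "x \<in> alt_cone V E ends col" and xi: "\<forall>e. x e \<in> \<int>" and e0: "e0 \<in> E" "x e0 > 0"
  shows "\<exists>W. CAW V E ends col W \<and> (\<forall>e. chi W e \<le> x e)"
proof -
  obtain a b where ab: "ends e0 = {a, b}" "a \<noteq> b" using card2[OF e0(1)] card_2_iff by metis
  have abV: "a \<in> V" "b \<in> V" using endsV[OF e0(1)] ab by auto
  have w: "walk V E ends ([a, b], [e0])" using e0 ab abV unfolding walk_pair by auto
  have ia: "int_alternating col ([a, b], [e0])" unfolding int_alt_pair by simp
  have x1: "x e0 \<ge> 1" using xi e0(2) int_pos by blast
  have le: "\<forall>e. chi ([a, b], [e0]) e \<le> x e" using x1 x unfolding cone_iff by (auto simp: chi_def)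
  have "(\<Sum>e\<in>E. x e - chi ([a, b], [e0]) e) \<in> \<int>" using xi by (intro Ints_sum) (simp add: chi_def)
  moreover have "(\<Sum>e\<in>E. x e - chi ([a, b], [e0]) e) \<ge> 0" using le by (intro sum_nonneg) simp
  ultimately obtain n where "(\<Sum>e\<in>E. x e - chi ([a, b], [e0]) e) = real n"
    using int_nat by blast
  from euler[OF x xi w _ ia le this] show ?thesis by simp
qed

lemma CAW_len: "CAW V E ends col W \<Longrightarrow> (\<Sum>e\<in>E. chi W e) = real (length (snd W)) \<and> length (snd W) > 0"
  using chi_sum_len by (cases W) (auto simp: CAW_def)

lemma CAW_irred_decomp: "CAW V E ends col W \<Longrightarrow>
   \<exists>Ws. (\<forall>W'\<in>set Ws. irreducible_CAW V E ends col W') \<and> chi W = (\<lambda>e. \<Sum>W'\<leftarrow>Ws. chi W' e)"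
proof (induction "length (snd W)" arbitrary: W rule: less_induct)
  case less
  show ?case
  proof (cases "irreducible_CAW V E ends col W")
    case True
    then show ?thesis by (intro exI[of _ "[W]"]) auto
  next
    case False
    then obtain W1 W2 where c: "CAW V E ends col W1" "CAW V E ends col W2" and ch: "chi W = (\<lambda>e. chi W1 e + chi W2 e)"
      using less.prems unfolding irreducible_CAW_def by blast
    have "(\<Sum>e\<in>E. chi W e) = (\<Sum>e\<in>E. chi W1 e) + (\<Sum>e\<in>E. chi W2 e)" using ch by (simp add: sum.distrib)
    then have "length (snd W) = length (snd W1) + length (snd W2)" using CAW_len[OF less.prems] CAW_len[OF c(1)] CAW_len[OF c(2)] by simp
    moreover have "length (snd W1) > 0" "length (snd W2) > 0" using CAW_len[OF c(1)] CAW_len[OF c(2)] by auto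
    ultimately have l: "length (snd W1) < length (snd W)" "length (snd W2) < length (snd W)" by auto
    obtain Ws1 where 1: "\<forall>W'\<in>set Ws1. irreducible_CAW V E ends col W'" "chi W1 = (\<lambda>e. \<Sum>W'\<leftarrow>Ws1. chi W' e)"
      using less.hyps[OF l(1) c(1)] by blast
    obtain Ws2 where 2: "\<forall>W'\<in>set Ws2. irreducible_CAW V E ends col W'" "chi W2 = (\<lambda>e. \<Sum>W'\<leftarrow>Ws2. chi W' e)"
      using less.hyps[OF l(2) c(2)] by blast
    show ?thesis using 1 2 ch by (intro exI[of _ "Ws1 @ Ws2"]) auto
  qed
qed

lemma CAT_irred_decomp: "CAT V E ends col W \<Longrightarrow>
   \<exists>Ws. (\<forall>W'\<in>set Ws. irreducible_CAT V E ends col W') \<and> chi W = (\<lambda>e. \<Sum>W'\<leftarrow>Ws. chi W' e)"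
proof (induction "length (snd W)" arbitrary: W rule: less_induct)
  case less
  show ?case
  proof (cases "irreducible_CAT V E ends col W")
    case True
    then show ?thesis by (intro exI[of _ "[W]"]) auto
  next
    case False
    then obtain W1 W2 where c: "CAT V E ends col W1" "CAT V E ends col W2" and ch: "chi W = (\<lambda>e. chi W1 e + chi W2 e)"
      using less.prems unfolding irreducible_CAT_def by blast
    have cc: "CAW V E ends col W" "CAW V E ends col W1" "CAW V E ends col W2" using c less.prems unfolding CAT_def by auto
    have "(\<Sum>e\<in>E. chi W e) = (\<Sum>e\<in>E. chi W1 e) + (\<Sum>e\<in>E. chi W2 e)" using ch by (simp add: sum.distrib)
    then have "length (snd W) = length (snd W1) + length (snd W2)" using CAW_len[OF cc(1)] CAW_len[OF cc(2)] CAW_len[OF cc(3)] by simp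
    moreover have "length (snd W1) > 0" "length (snd W2) > 0" using CAW_len[OF cc(2)] CAW_len[OF cc(3)] by auto
    ultimately have l: "length (snd W1) < length (snd W)" "length (snd W2) < length (snd W)" by auto
    obtain Ws1 where 1: "\<forall>W'\<in>set Ws1. irreducible_CAT V E ends col W'" "chi W1 = (\<lambda>e. \<Sum>W'\<leftarrow>Ws1. chi W' e)"
      using less.hyps[OF l(1) c(1)] by blast
    obtain Ws2 where 2: "\<forall>W'\<in>set Ws2. irreducible_CAT V E ends col W'" "chi W2 = (\<lambda>e. \<Sum>W'\<leftarrow>Ws2. chi W' e)"
      using less.hyps[OF l(2) c(2)] by blast
    show ?thesis using 1 2 ch by (intro exI[of _ "Ws1 @ Ws2"]) auto
  qed
qed

lemma int_decomp_aux:
  "x \<in> alt_cone V E ends col \<Longrightarrow> \<forall>e. x e \<in> \<int> \<Longrightarrow> (\<Sum>e\<in>E. x e) = real n \<Longrightarrow>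
   \<exists>Ws. (\<forall>W\<in>set Ws. irreducible_CAW V E ends col W) \<and> x = (\<lambda>e. \<Sum>W\<leftarrow>Ws. chi W e)"
proof (induction n arbitrary: x rule: less_induct)
  case (less n)
  note x = less.prems(1) and xi = less.prems(2) and sm = less.prems(3)
  show ?case
  proof (cases "\<exists>e0\<in>E. x e0 > 0")
    case False
    then have "x = (\<lambda>e. 0)" using x unfolding cone_iff by (force simp: fun_eq_iff)
    then show ?thesis by (intro exI[of _ "[]"]) auto
  next
    case True
    then obtain e0 where e0: "e0 \<in> E" "x e0 > 0" by blast
    obtain W where W: "CAW V E ends col W" "\<forall>e. chi W e \<le> x e" using exists_CAW_below[OF x xi e0] by blast
    define x' where "x' = (\<lambda>e. x e - chi W e)"
    have cW: "chi W \<in> alt_cone V E ends col" by (rule CAW_cone[OF W(1)])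
    have x': "x' \<in> alt_cone V E ends col" using x cW W(2) unfolding cone_iff x'_def by (auto simp: bal_diff)
    have xi': "\<forall>e. x' e \<in> \<int>" using xi unfolding x'_def by (auto simp: chi_def)
    have "(\<Sum>e\<in>E. x' e) = real n - real (length (snd W))"
      using CAW_len[OF W(1)] sm unfolding x'_def by (simp add: sum_subtractf)
    moreover have "(\<Sum>e\<in>E. x' e) \<ge> 0" using x' unfolding cone_iff by (auto intro: sum_nonneg)
    moreover have "length (snd W) > 0" using CAW_len[OF W(1)] by simp
    ultimately have s1: "(\<Sum>e\<in>E. x' e) = real (n - length (snd W))" and s2: "length (snd W) \<le> n"
      by (simp_all add: of_nat_diff)
    have s3: "n - length (snd W) < n" using \<open>length (snd W) > 0\<close> s2 by (simp del: length_greater_0_conv)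
    obtain Ws' where 1: "\<forall>W\<in>set Ws'. irreducible_CAW V E ends col W" "x' = (\<lambda>e. \<Sum>W\<leftarrow>Ws'. chi W e)"
      using less.IH[OF s3 x' xi' s1] by blast
    obtain Ws where 2: "\<forall>W\<in>set Ws. irreducible_CAW V E ends col W" "chi W = (\<lambda>e. \<Sum>W\<leftarrow>Ws. chi W e)"
      using CAW_irred_decomp[OF W(1)] by blast
    have "x = (\<lambda>e. chi W e + x' e)" unfolding x'_def by simp
    then show ?thesis using 1 2 by (intro exI[of _ "Ws @ Ws'"]) (auto simp: fun_eq_iff)
  qed
qed

lemma part2: "x \<in> alt_cone V E ends col \<Longrightarrow> \<forall>e. x e \<in> \<int> \<Longrightarrow>
   \<exists>Ws. (\<forall>W\<in>set Ws. irreducible_CAW V E ends col W) \<and> x = (\<lambda>e. \<Sum>W\<leftarrow>Ws. chi W e)"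
proof -
  assume x: "x \<in> alt_cone V E ends col" and xi: "\<forall>e. x e \<in> \<int>"
  have "(\<Sum>e\<in>E. x e) \<in> \<int>" using xi by (intro Ints_sum) simp
  moreover have "(\<Sum>e\<in>E. x e) \<ge> 0" using x unfolding cone_iff by (auto intro: sum_nonneg)
  ultimately obtain n where "(\<Sum>e\<in>E. x e) = real n"
    using int_nat by blast
  then show ?thesis using int_decomp_aux[OF x xi] by blast
qed

end

context tcg begin

lemma part3_aux:
  "x \<in> alt_cone V E ends col \<Longrightarrow> \<forall>e. x e \<in> {0, 1} \<Longrightarrow> (\<Sum>e\<in>E. x e) = real n \<Longrightarrow>
   \<exists>Ts. (\<forall>T\<in>set Ts. irreducible_CAT V E ends col T) \<and> x = (\<lambda>e. \<Sum>T\<leftarrow>Ts. chi T e)"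
proof (induction n arbitrary: x rule: less_induct)
  case (less n)
  note x = less.prems(1) and x01 = less.prems(2) and sm = less.prems(3)
  have xi: "\<forall>e. x e \<in> \<int>" using x01 by (metis Ints_0 Ints_1 insert_iff singletonD)
  show ?case
  proof (cases "\<exists>e0\<in>E. x e0 > 0")
    case False
    then have "x = (\<lambda>e. 0)" using x unfolding cone_iff by (force simp: fun_eq_iff)
    then show ?thesis by (intro exI[of _ "[]"]) auto
  next
    case True
    then obtain e0 where e0: "e0 \<in> E" "x e0 > 0" by blast
    obtain W where W: "CAW V E ends col W" "\<forall>e. chi W e \<le> x e" using exists_CAW_below[OF x xi e0] by blast
    obtain vs es where Wp: "W = (vs, es)" by (cases W)
    have c1: "count_list es e \<le> 1" for e
    proof -
      have "real (count_list es e) \<le> x e" using W(2) Wp by (auto simp: chi_def)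
      moreover have "x e \<le> 1" using x01[rule_format, of e] by auto
      ultimately have "real (count_list es e) \<le> 1" by linarith
      then show ?thesis by simp
    qed
    have T: "CAT V E ends col W" using W(1) distinct_count[OF c1] Wp unfolding CAT_def trail_def by auto
    define x' where "x' = (\<lambda>e. x e - chi W e)"
    have cW: "chi W \<in> alt_cone V E ends col" by (rule CAW_cone[OF W(1)])
    have x': "x' \<in> alt_cone V E ends col" using x cW W(2) unfolding cone_iff x'_def by (auto simp: bal_diff)
    have x01': "\<forall>e. x' e \<in> {0, 1}"
    proof
      fix e
      have "count_list es e = 0 \<or> count_list es e = 1" using c1[of e] by auto
      moreover have "real (count_list es e) \<le> x e" using W(2) Wp by (auto simp: chi_def)
      moreover have "x e = 0 \<or> x e = 1" using x01[rule_format, of e] by auto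
      ultimately have "x e - real (count_list es e) = 0 \<or> x e - real (count_list es e) = 1" by auto
      then show "x' e \<in> {0, 1}" using Wp unfolding x'_def chi_def by auto
    qed
    have "(\<Sum>e\<in>E. x' e) = real n - real (length (snd W))"
      using CAW_len[OF W(1)] sm unfolding x'_def by (simp add: sum_subtractf)
    moreover have "(\<Sum>e\<in>E. x' e) \<ge> 0" using x' unfolding cone_iff by (auto intro: sum_nonneg)
    moreover have "length (snd W) > 0" using CAW_len[OF W(1)] by simp
    ultimately have s1: "(\<Sum>e\<in>E. x' e) = real (n - length (snd W))" and s2: "length (snd W) \<le> n"
      by (simp_all add: of_nat_diff)
    have s3: "n - length (snd W) < n" using \<open>length (snd W) > 0\<close> s2 by (simp del: length_greater_0_conv)
    obtain Ts' where 1: "\<forall>T\<in>set Ts'. irreducible_CAT V E ends col T" "x' = (\<lambda>e. \<Sum>T\<leftarrow>Ts'. chi T e)"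
      using less.IH[OF s3 x' x01' s1] by blast
    obtain Ts where 2: "\<forall>T\<in>set Ts. irreducible_CAT V E ends col T" "chi W = (\<lambda>e. \<Sum>T\<leftarrow>Ts. chi T e)"
      using CAT_irred_decomp[OF T] by blast
    have "x = (\<lambda>e. chi W e + x' e)" unfolding x'_def by simp
    then show ?thesis using 1 2 by (intro exI[of _ "Ts @ Ts'"]) (auto simp: fun_eq_iff)
  qed
qed

lemma part3: "x \<in> alt_cone V E ends col \<Longrightarrow> \<forall>e. x e \<in> {0, 1} \<Longrightarrow>
   \<exists>Ts. (\<forall>T\<in>set Ts. irreducible_CAT V E ends col T) \<and> x = (\<lambda>e. \<Sum>T\<leftarrow>Ts. chi T e)"
proof -
  assume x: "x \<in> alt_cone V E ends col" and x01: "\<forall>e. x e \<in> {0, 1}"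
  have "(\<Sum>e\<in>E. x e) \<in> \<int>" using x01 by (intro Ints_sum) (metis Ints_0 Ints_1 insert_iff singletonD)
  moreover have "(\<Sum>e\<in>E. x e) \<ge> 0" using x unfolding cone_iff by (auto intro: sum_nonneg)
  ultimately obtain n where "(\<Sum>e\<in>E. x e) = real n" using int_nat by blast
  then show ?thesis using part3_aux[OF x x01] by blast
qed

end

lemma int_alt_last_hd: assumes "int_alternating col (vs, es)" "es \<noteq> []"
  shows "col (last es) = col (hd es) \<longleftrightarrow> odd (length es)"
proof -
  have "last es = es ! (length es - 1)" "hd es = es ! 0" using assms(2) by (auto simp: last_conv_nth hd_conv_nth)
  then show ?thesis using int_alt_parity[OF assms(1), of "length es - 1"] assms(2)
    by (cases "length es") auto
qed

lemma distinct_tl_cyc: assumes "hd xs = last xs" "2 \<le> length xs" "distinct (butlast xs)"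
  shows "distinct (tl xs)"
proof -
  obtain a ys where xs: "xs = a # ys" using assms(2) by (cases xs) auto
  have "ys \<noteq> []" using assms(2) xs by auto
  then obtain mid where ys: "ys = mid @ [a]" using assms(1) xs by (metis append_butlast_last_id last_ConsR list.sel(1))
  show ?thesis using assms(3) xs ys by simp
qed

lemma take_drop_inter: assumes "distinct xs" "l < length xs"
  shows "set (take (Suc l) xs) \<inter> set (drop l xs) = {xs ! l}"
proof -
  have t: "take (Suc l) xs = take l xs @ [xs ! l]" using assms(2) by (simp add: take_Suc_conv_app_nth)
  have d: "drop l xs = xs ! l # drop (Suc l) xs" using assms(2) by (simp add: Cons_nth_drop_Suc)
  have "set (take l xs) \<inter> set (drop l xs) = {}" using assms(1) by (simp add: set_take_disj_set_drop_if_distinct)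
  moreover have "xs ! l \<in> set (drop l xs)" using d by simp
  ultimately show ?thesis using t by auto
qed

context tcg begin

lemma walk_ends: "walk V E ends (vs, es) \<Longrightarrow> j < length es \<Longrightarrow> ends (es ! j) = {vs ! j, vs ! Suc j}"
  unfolding walk_pair by blast

lemma walk_len: "walk V E ends (vs, es) \<Longrightarrow> length vs = Suc (length es)"
  unfolding walk_pair by blast

lemma path_distinct_edges: assumes w: "walk V E ends (vs, es)" and d: "distinct vs"
  shows "distinct es"
  unfolding distinct_conv_nth
proof (intro allI impI)
  fix j k assume jk: "j < length es" "k < length es" "j \<noteq> k"
  have l: "length vs = Suc (length es)" by (rule walk_len[OF w])
  show "es ! j \<noteq> es ! k"
  proof
    assume eq: "es ! j = es ! k"
    have "{vs ! j, vs ! Suc j} = {vs ! k, vs ! Suc k}" using walk_ends[OF w jk(1)] walk_ends[OF w jk(2)] eq by simp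
    then have "(vs ! j = vs ! k \<and> vs ! Suc j = vs ! Suc k) \<or> (vs ! j = vs ! Suc k \<and> vs ! Suc j = vs ! k)"
      by (auto simp: doubleton_eq_iff)
    then show False
    proof
      assume "vs ! j = vs ! k \<and> vs ! Suc j = vs ! Suc k"
      then have "j = k" using d jk l by (simp add: nth_eq_iff_index_eq)
      then show False using jk by simp
    next
      assume a: "vs ! j = vs ! Suc k \<and> vs ! Suc j = vs ! k"
      have "j = Suc k" using a d jk l nth_eq_iff_index_eq[of vs j "Suc k"] by simp
      moreover have "Suc j = k" using a d jk l nth_eq_iff_index_eq[of vs "Suc j" k] by simp
      ultimately show False by arith
    qed
  qed
qed

lemma edge_in_ends: assumes "walk V E ends (vs, es)" "e \<in> set es" shows "ends e \<subseteq> set vs"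
  using walk_edge_in[OF assms] by simp

lemma no_common_edge: assumes "walk V E ends (vs1, es1)" "walk V E ends (vs2, es2)" "set vs1 \<inter> set vs2 \<subseteq> {u}"
  shows "set es1 \<inter> set es2 = {}"
proof (rule ccontr)
  assume "set es1 \<inter> set es2 \<noteq> {}"
  then obtain e where e: "e \<in> set es1" "e \<in> set es2" by blast
  have "ends e \<subseteq> {u}" using edge_in_ends[OF assms(1) e(1)] edge_in_ends[OF assms(2) e(2)] assms(3) by blast
  moreover have "card (ends e) = 2" using card2 walk_edge_in[OF assms(1) e(1)] by blast
  ultimately show False by (metis card.empty card_insert_disjoint empty_iff finite.intros(1) insert_absorb numeral_2_eq_2 subset_singleton_iff n_not_Suc_n zero_neq_numeral)
qed

definition apath :: "'e set \<Rightarrow> 'v list \<Rightarrow> 'e list \<Rightarrow> bool" where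
  "apath H vs es \<longleftrightarrow> walk V E ends (vs, es) \<and> set es \<subseteq> H \<and> int_alternating col (vs, es) \<and> distinct vs"

definition both :: "'e set \<Rightarrow> bool" where
  "both H \<longleftrightarrow> (\<forall>v e. e \<in> H \<and> v \<in> ends e \<longrightarrow> (\<exists>f\<in>H. v \<in> ends f \<and> col f \<noteq> col e))"

lemma last_in_ends_last: assumes "walk V E ends (vs, es)" "es \<noteq> []" shows "last vs \<in> ends (last es)"
proof -
  have l: "length vs = Suc (length es)" by (rule walk_len[OF assms(1)])
  have "ends (last es) = {vs ! (length es - 1), vs ! Suc (length es - 1)}"
    using walk_ends[OF assms(1), of "length es - 1"] assms(2) by (simp add: last_conv_nth)
  moreover have "last vs = vs ! length es" using l by (metis diff_Suc_1 last_conv_nth length_0_conv nat.distinct(1))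
  moreover have "Suc (length es - 1) = length es" using assms(2) by simp
  ultimately show ?thesis by simp
qed

lemma apath_snoc: assumes p: "apath H vs es" and f: "f \<in> H" "H \<subseteq> E" "ends f = {last vs, y}" and y: "y \<notin> set vs"
  and c: "es \<noteq> [] \<Longrightarrow> col f \<noteq> col (last es)"
  shows "apath H (vs @ [y]) (es @ [f])"
proof -
  have yV: "y \<in> V" using endsV f by blast
  have w: "walk V E ends (vs, es)" and ia: "int_alternating col (vs, es)" using p unfolding apath_def by auto
  have "int_alternating col (vs @ [y], es @ [f])"
    by (rule int_alt_append[OF ia]) (use c in \<open>auto simp: int_alt_pair\<close>)
  moreover have "walk V E ends (vs @ [y], es @ [f])" using walk_snoc[OF w _ f(3) yV] f by auto
  ultimately show ?thesis using p f y unfolding apath_def by auto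
qed

lemma close_cycle:
  assumes p: "apath H vs es" and ne: "es \<noteq> []" and f: "f \<in> H" "H \<subseteq> E" "ends f = {last vs, y}"
    and c: "col f \<noteq> col (last es)" and i: "i < length es" "vs ! i = y"
  defines "C \<equiv> (drop i vs @ [y], drop i es @ [f])"
  shows "walk V E ends C \<and> cycle C \<and> int_alternating col C \<and> set (snd C) \<subseteq> H \<and> hd (fst C) = y
     \<and> hd (snd C) = es ! i"
proof -
  have w: "walk V E ends (vs, es)" and ia: "int_alternating col (vs, es)" and d: "distinct vs" and H: "set es \<subseteq> H"
    using p unfolding apath_def by auto
  have l: "length vs = Suc (length es)" by (rule walk_len[OF w])
  have de: "distinct es" by (rule path_distinct_edges[OF w d])
  have yV: "y \<in> V" using endsV f by blast
  have ld: "last (drop i vs) = last vs" using i l by (simp add: last_drop)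
  have wC: "walk V E ends C" unfolding C_def
    by (rule walk_snoc[OF walk_drop[OF w]]) (use i f yV ld in auto)
  have fn: "f \<notin> set (drop i es)"
  proof
    assume "f \<in> set (drop i es)"
    then obtain k where k: "k < length (drop i es)" "drop i es ! k = f" by (auto simp: in_set_conv_nth)
    then have j: "i \<le> i + k" "i + k < length es" "es ! (i + k) = f" using i by auto
    define j where "j = i + k"
    note j = j[folded j_def]
    have "{vs ! j, vs ! Suc j} = {vs ! length es, vs ! i}"
    proof -
      have "last vs = vs ! length es" using l by (metis diff_Suc_1 last_conv_nth length_0_conv nat.distinct(1))
      then show ?thesis using walk_ends[OF w j(2)] j(3) f(3) i by (simp add: insert_commute)
    qed
    then have "(vs ! j = vs ! length es \<and> vs ! Suc j = vs ! i) \<or> (vs ! j = vs ! i \<and> vs ! Suc j = vs ! length es)"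
      by (auto simp: doubleton_eq_iff)
    then have "j = length es - 1"
      using d l j i by (auto simp: nth_eq_iff_index_eq)
    then have "f = last es" using j ne by (simp add: last_conv_nth)
    then show False using c by simp
  qed
  have cyc: "cycle C" unfolding cycle_def closed_walk_def C_def
    using i l d de fn by (auto simp: hd_drop_conv_nth butlast_append)
  have iaC: "int_alternating col C" unfolding C_def
    by (rule int_alt_append[OF int_alt_drop[OF ia]]) (use i c in \<open>auto simp: int_alt_pair last_drop\<close>)
  show ?thesis using wC cyc iaC H f i l unfolding C_def
    by (auto simp: hd_drop_conv_nth dest: in_set_dropD)
qed

end

context tcg begin

lemma distinct_len_V: "distinct vs \<Longrightarrow> set vs \<subseteq> V \<Longrightarrow> length vs \<le> card V"
  using finV by (metis card_mono distinct_card)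

lemma cycle_result:
  assumes p: "apath H vs es" and ne: "es \<noteq> []" and f: "f \<in> H" "H \<subseteq> E" "ends f = {last vs, y}"
    and c: "col f \<noteq> col (last es)" and i: "i < length es" "vs ! i = y"
  defines "C \<equiv> (drop i vs @ [y], drop i es @ [f])"
  shows "(even (length (snd C)) \<longrightarrow> alt_cycle V E ends col C) \<and> (odd (length (snd C)) \<longrightarrow> odd_ia_cycle V E ends col C y)"
proof -
  have cc: "walk V E ends C" "cycle C" "int_alternating col C" "hd (fst C) = y"
    using close_cycle[OF p ne f c i] unfolding C_def by auto
  have ne': "snd C \<noteq> []" unfolding C_def by simp
  have "even (length (snd C)) \<Longrightarrow> alternating col C"
    using int_alt_last_hd[of col "fst C" "snd C"] cc(3) ne' unfolding alternating_def by auto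
  then show ?thesis using cc unfolding alt_cycle_def odd_ia_cycle_def by auto
qed

lemma phase1:
  assumes b: "both H" and HE: "H \<subseteq> E"
  shows "apath H vs es \<Longrightarrow> es \<noteq> [] \<Longrightarrow> card V - length vs = n \<Longrightarrow>
    (\<exists>C. alt_cycle V E ends col C \<and> set (snd C) \<subseteq> H) \<or> (\<exists>C u. odd_ia_cycle V E ends col C u \<and> set (snd C) \<subseteq> H)"
proof (induction n arbitrary: vs es rule: less_induct)
  case (less n)
  note p = less.prems(1) and ne = less.prems(2) and nn = less.prems(3)
  have w: "walk V E ends (vs, es)" and H: "set es \<subseteq> H" and d: "distinct vs" using p unfolding apath_def by auto
  have l: "length vs = Suc (length es)" by (rule walk_len[OF w])
  have "last es \<in> H" using H ne by auto
  moreover have "last vs \<in> ends (last es)" by (rule last_in_ends_last[OF w ne])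
  ultimately obtain f where f: "f \<in> H" "last vs \<in> ends f" "col f \<noteq> col (last es)" using b unfolding both_def by blast
  obtain y where y: "y \<noteq> last vs" "ends f = {last vs, y}" using other_end[OF _ f(2)] f(1) HE by blast
  show ?case
  proof (cases "y \<in> set vs")
    case False
    have p': "apath H (vs @ [y]) (es @ [f])" by (rule apath_snoc[OF p f(1) HE y(2) False]) (use f(3) in simp)
    have "set (vs @ [y]) \<subseteq> V" using p' walk_verts unfolding apath_def by blast
    then have "length (vs @ [y]) \<le> card V" using p' unfolding apath_def by (intro distinct_len_V) auto
    then have "card V - length (vs @ [y]) < n" using nn by simp
    then show ?thesis using less.IH[OF _ p'] by simp
  next
    case True
    then obtain i where i: "i < length vs" "vs ! i = y" by (auto simp: in_set_conv_nth)
    have "i \<noteq> length es" using y(1) i l by (metis diff_Suc_1 last_conv_nth length_0_conv nat.distinct(1))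
    then have i': "i < length es" using i l by simp
    note r = cycle_result[OF p ne f(1) HE y(2) f(3) i' i(2)]
    have sH: "set (snd (drop i vs @ [y], drop i es @ [f])) \<subseteq> H" using H f(1) by (auto dest: in_set_dropD)
    show ?thesis
    proof (cases "even (length (snd (drop i vs @ [y], drop i es @ [f])))")
      case True then show ?thesis using r sH by blast
    next
      case False then show ?thesis using r sH by blast
    qed
  qed
qed

end

lemma last_concat_v: "c \<noteq> [] \<Longrightarrow> a \<noteq> [] \<Longrightarrow> last a = hd c \<Longrightarrow> last (a @ tl c) = last c"
  by (cases c) auto

lemma distinct_hd_last: "distinct xs \<Longrightarrow> xs \<noteq> [] \<Longrightarrow> hd xs = last xs \<Longrightarrow> length xs = 1"
  by (cases xs) (auto split: if_splits)

context tcg begin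

lemma cyc_facts: assumes "odd_ia_cycle V E ends col (cv, ce) u"
  shows "walk V E ends (cv, ce)" "length cv = Suc (length ce)" "cv ! 0 = u" "cv ! length ce = u"
    "hd cv = u" "last cv = u" "distinct ce" "int_alternating col (cv, ce)" "odd (length ce)" "ce \<noteq> []"
    "\<And>i j. i < length ce \<Longrightarrow> j < length ce \<Longrightarrow> cv ! i = cv ! j \<Longrightarrow> i = j"
    "col (last ce) = col (hd ce)"
proof -
  have w: "walk V E ends (cv, ce)" and cy: "cycle (cv, ce)" and o: "odd (length ce)" and ia: "int_alternating col (cv, ce)" and h: "hd cv = u"
    using assms unfolding odd_ia_cycle_def by auto
  have l: "length cv = Suc (length ce)" by (rule walk_len[OF w])
  have cl: "hd cv = last cv" and dce: "distinct ce" and db: "distinct (butlast cv)" and ne: "ce \<noteq> []"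
    using cy unfolding cycle_def closed_walk_def by auto
  show "walk V E ends (cv, ce)" "length cv = Suc (length ce)" "hd cv = u" "distinct ce" "int_alternating col (cv, ce)"
    "odd (length ce)" "ce \<noteq> []" using w l h dce ia o ne by auto
  show "cv ! 0 = u" using h l by (cases cv) auto
  show "last cv = u" using cl h by simp
  then show "cv ! length ce = u" using l by (metis diff_Suc_1 last_conv_nth length_0_conv nat.distinct(1))
  show "\<And>i j. i < length ce \<Longrightarrow> j < length ce \<Longrightarrow> cv ! i = cv ! j \<Longrightarrow> i = j"
  proof -
    fix i j assume ij: "i < length ce" "j < length ce" "cv ! i = cv ! j"
    have "butlast cv ! i = butlast cv ! j" using ij l by (simp add: nth_butlast)
    then show "i = j" using db ij l by (simp add: nth_eq_iff_index_eq)
  qed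
  show "col (last ce) = col (hd ce)" using int_alt_last_hd[OF ia ne] o by simp
qed

lemma odd_cycle_rev: assumes "odd_ia_cycle V E ends col (cv, ce) u"
  shows "odd_ia_cycle V E ends col (rev cv, rev ce) u"
proof -
  note cf = cyc_facts[OF assms]
  have cy: "cycle (cv, ce)" using assms unfolding odd_ia_cycle_def by auto
  have "distinct (tl cv)"
    by (rule distinct_tl_cyc) (use cy cf(2) cf(10) in \<open>auto simp: cycle_def closed_walk_def Suc_le_eq\<close>)
  then have "cycle (rev cv, rev ce)" using cf unfolding cycle_def closed_walk_def
    by (auto simp: hd_rev last_rev butlast_rev)
  then show ?thesis using cf walk_rev[OF cf(1)] int_alt_rev[OF cf(8)] unfolding odd_ia_cycle_def
    by (auto simp: hd_rev)
qed

lemma bicycle_walk: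
  assumes "walk V E ends (cv1, ce1)" "walk V E ends (pv, pe)" "walk V E ends (cv2, ce2)"
    "last cv1 = hd pv" "last pv = hd cv2" "last cv2 = hd cv2"
  shows "walk V E ends (walk_concat (walk_concat (walk_concat (cv1, ce1) (pv, pe)) (cv2, ce2)) (walk_rev (pv, pe)))"
proof -
  have ne: "cv1 \<noteq> []" "pv \<noteq> []" "cv2 \<noteq> []" using walk_len assms(1-3) by (metis length_0_conv nat.distinct(1))+
  have w1: "walk V E ends (cv1 @ tl pv, ce1 @ pe)" using walk_concat[OF assms(1,2,4)] by (simp add: walk_concat_pair)
  have l1: "last (cv1 @ tl pv) = last pv" using last_concat_v[OF ne(2) ne(1) assms(4)] .
  have w2: "walk V E ends ((cv1 @ tl pv) @ tl cv2, (ce1 @ pe) @ ce2)" using walk_concat[OF w1 assms(3)] l1 assms(5) by (simp add: walk_concat_pair)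
  have l2: "last ((cv1 @ tl pv) @ tl cv2) = last cv2" using last_concat_v[of cv2 "cv1 @ tl pv"] l1 assms(5) ne by simp
  have w3: "walk V E ends (rev pv, rev pe)" by (rule walk_rev[OF assms(2)])
  have "walk V E ends (walk_concat ((cv1 @ tl pv) @ tl cv2, (ce1 @ pe) @ ce2) (rev pv, rev pe))"
    by (rule walk_concat[OF w2 w3]) (use l2 assms(5,6) ne in \<open>simp add: hd_rev\<close>)
  then show ?thesis by (simp add: walk_concat_pair walk_rev_def)
qed

lemma bicycle_alt:
  assumes "int_alternating col (cv1, ce1)" "int_alternating col (pv, pe)" "int_alternating col (cv2, ce2)"
    "ce1 \<noteq> []" "ce2 \<noteq> []" "col (last ce1) = col (hd ce1)" "col (last ce2) = col (hd ce2)"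
    "pe \<noteq> [] \<Longrightarrow> col (hd pe) \<noteq> col (hd ce1) \<and> col (last pe) \<noteq> col (hd ce2)"
    "pe = [] \<Longrightarrow> col (hd ce1) \<noteq> col (hd ce2)"
  shows "alternating col (vs, ce1 @ pe @ ce2 @ rev pe)"
proof -
  have i3: "int_alternating col (vs, ce2 @ rev pe)"
    by (rule int_alt_append[OF assms(3) int_alt_rev[OF assms(2)]]) (use assms(7,8) in \<open>auto simp: last_rev hd_rev\<close>)
  have i2: "int_alternating col (vs, pe @ ce2 @ rev pe)"
    by (rule int_alt_append[OF assms(2) i3]) (use assms(5,8) in auto)
  have i1: "int_alternating col (vs, ce1 @ pe @ ce2 @ rev pe)"
    by (rule int_alt_append[OF assms(1) i2]) (use assms(5,6,8,9) in \<open>cases "pe = []"; auto\<close>)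
  have "col (last (ce1 @ pe @ ce2 @ rev pe)) \<noteq> col (hd (ce1 @ pe @ ce2 @ rev pe))"
    using assms(4,5,7,8,9) by (cases "pe = []") (auto simp: last_rev)
  then show ?thesis using i1 unfolding alternating_def by simp
qed

lemma theta:
  assumes C1: "odd_ia_cycle V E ends col (cv, ce) u" and H1: "set ce \<subseteq> H" and HE: "H \<subseteq> E"
    and p: "apath H qs qe" and hq: "hd qs = u" and dj: "set qs \<inter> set cv = {u}"
    and hc: "qe \<noteq> [] \<Longrightarrow> col (hd qe) \<noteq> col (hd ce)"
    and f: "f \<in> H" "ends f = {last qs, cv ! s}"
    and s: "0 < s" "s < length ce"
    and cf1: "qe = [] \<Longrightarrow> col f \<noteq> col (hd ce)"
    and cf2: "qe \<noteq> [] \<Longrightarrow> col f \<noteq> col (last qe)"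
    and cf3: "col f \<noteq> col (ce ! s)"
  shows "alt_cycle V E ends col (qs @ drop s cv, qe @ f # drop s ce) \<and> set (qe @ f # drop s ce) \<subseteq> H"
proof -
  note cf = cyc_facts[OF C1]
  let ?p = "length ce" and ?y = "cv ! s"
  have wq: "walk V E ends (qs, qe)" and Hq: "set qe \<subseteq> H" and iaq: "int_alternating col (qs, qe)" and dq: "distinct qs"
    using p unfolding apath_def by auto
  have lq: "length qs = Suc (length qe)" by (rule walk_len[OF wq])
  have qne: "qs \<noteq> []" using lq by auto
  have yu: "?y \<noteq> u" using cf(3) cf(10) cf(11)[of s 0] s by auto
  have ycv: "?y \<in> set cv" using s cf(2) by simp
  have yq: "?y \<notin> set qs" using dj yu ycv by blast
  have yV: "?y \<in> V" using endsV f HE by blast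
  have w1: "walk V E ends (qs @ [?y], qe @ [f])" by (rule walk_snoc[OF wq _ f(2) yV]) (use f HE in auto)
  have w2: "walk V E ends (drop s cv, drop s ce)" by (rule walk_drop[OF cf(1)]) (use s in simp)
  have dcv: "drop s cv = ?y # drop (Suc s) cv" using s cf(2) by (simp add: Cons_nth_drop_Suc)
  have wT: "walk V E ends (qs @ drop s cv, qe @ f # drop s ce)"
    using walk_concat[OF w1 w2] dcv by (simp add: walk_concat_pair)
  have lastq_u: "last qs = u \<Longrightarrow> qe = []"
    using distinct_hd_last[OF dq qne] hq lq by simp
  have fq: "f \<notin> set qe"
  proof
    assume "f \<in> set qe"
    then have "ends f \<subseteq> set qs" by (rule edge_in_ends[OF wq])
    then show False using f(2) yq by auto
  qed
  have fc: "f \<notin> set (drop s ce)"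
  proof
    assume "f \<in> set (drop s ce)"
    then obtain k where k: "k < length (drop s ce)" "drop s ce ! k = f" by (auto simp: in_set_conv_nth)
    define j where "j = s + k"
    have j: "s \<le> j" "j < ?p" "ce ! j = f" using k s unfolding j_def by auto
    have ej: "ends f = {cv ! j, cv ! Suc j}" using walk_ends[OF cf(1) j(2)] j(3) by simp
    have "last qs \<in> ends f" using f(2) by blast
    then have "last qs \<in> {cv ! j, cv ! Suc j}" using ej by blast
    moreover have "cv ! j \<in> set cv" "cv ! Suc j \<in> set cv" using j cf(2) by (auto intro!: nth_mem)
    ultimately have "last qs \<in> set cv" by auto
    moreover have "last qs \<in> set qs" using qne by (rule last_in_set)
    ultimately have lu: "last qs = u" using dj by blast
    then have qe0: "qe = []" by (rule lastq_u)
    have "u \<in> ends f" using f(2) lu by blast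
    then have "u \<in> {cv ! j, cv ! Suc j}" using ej by blast
    moreover have "cv ! j \<noteq> u"
    proof
      assume "cv ! j = u"
      then have "j = 0" using cf(3) cf(10) cf(11)[of j 0] j by simp
      then show False using j s by simp
    qed
    ultimately have "cv ! Suc j = u" by blast
    have "Suc j = ?p"
    proof (rule ccontr)
      assume "Suc j \<noteq> ?p"
      then have "Suc j < ?p" using j by simp
      then have "Suc j = 0" using cf(3) cf(10) cf(11)[of "Suc j" 0] \<open>cv ! Suc j = u\<close> by simp
      then show False by simp
    qed
    then have "j = ?p - 1" by simp
    then have "f = last ce" using j(3) cf(10) by (simp add: last_conv_nth)
    then show False using cf1[OF qe0] cf(12) by simp
  qed
  have qc: "set qe \<inter> set (drop s ce) = {}"
    using no_common_edge[OF wq cf(1), of u] dj by (auto dest: in_set_dropD)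
  have dqe: "distinct qe" by (rule path_distinct_edges[OF wq dq])
  have dist_edges: "distinct (qe @ f # drop s ce)" using dqe cf(7) fq fc qc by auto
  have lastT: "last (qs @ drop s cv) = u" using cf(6) s cf(2) by (simp add: last_drop)
  have hdT: "hd (qs @ drop s cv) = u" using hq qne by simp
  have bl: "butlast (qs @ drop s cv) = qs @ drop s (butlast cv)" using s cf(2) by (simp add: butlast_append drop_butlast)
  have db: "distinct (drop s (butlast cv))"
    using C1 unfolding odd_ia_cycle_def cycle_def by auto
  have ud: "u \<notin> set (drop s (butlast cv))"
  proof
    assume "u \<in> set (drop s (butlast cv))"
    then obtain k where k: "k < length (drop s (butlast cv))" "drop s (butlast cv) ! k = u" by (auto simp: in_set_conv_nth)
    then have "cv ! (s + k) = u" "s + k < ?p" using cf(2) by (auto simp: nth_butlast)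
    then show False using cf(3) cf(10) cf(11)[of "s + k" 0] s by auto
  qed
  have dqd: "set qs \<inter> set (drop s (butlast cv)) = {}"
  proof -
    have "set (drop s (butlast cv)) \<subseteq> set cv" by (meson in_set_butlastD in_set_dropD subsetI)
    show ?thesis
    proof (rule equals0I)
      fix x assume x: "x \<in> set qs \<inter> set (drop s (butlast cv))"
      then have "x \<in> set qs \<inter> set cv" using \<open>set (drop s (butlast cv)) \<subseteq> set cv\<close> by blast
      then have "x = u" using dj by blast
      then show False using x ud by blast
    qed
  qed
  have cyc: "cycle (qs @ drop s cv, qe @ f # drop s ce)"
    unfolding cycle_def closed_walk_def using lastT hdT bl db dq dqd dist_edges by simp
  have ia1: "int_alternating col (qs @ [?y], qe @ [f])"
    by (rule int_alt_append[OF iaq]) (use cf2 in \<open>auto simp: int_alt_pair\<close>)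
  have iaT: "int_alternating col (qs @ drop s cv, (qe @ [f]) @ drop s ce)"
    by (rule int_alt_append[OF ia1 int_alt_drop[OF cf(8)]]) (use cf3 s in \<open>auto simp: hd_drop_conv_nth\<close>)
  have lT: "last (qe @ f # drop s ce) = last ce" using s by (simp add: last_drop)
  have hT: "col (hd (qe @ f # drop s ce)) \<noteq> col (hd ce)" using hc cf1 by (cases qe) auto
  have alt: "alternating col (qs @ drop s cv, qe @ f # drop s ce)"
    using iaT lT hT cf(12) unfolding alternating_def by simp
  have ev: "even (length (qe @ f # drop s ce))"
    using alt_even[OF alt] lastT hdT unfolding closed_walk_def by simp
  have "set (qe @ f # drop s ce) \<subseteq> H" using Hq f H1 by (auto dest: in_set_dropD)
  then show ?thesis using wT cyc ev alt unfolding alt_cycle_def by simp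
qed

end

context tcg begin

lemma phase2:
  assumes b: "both H" and HE: "H \<subseteq> E" and C1: "odd_ia_cycle V E ends col (cv, ce) u" and H1: "set ce \<subseteq> H"
  shows "apath H qs qe \<Longrightarrow> hd qs = u \<Longrightarrow> set qs \<inter> set cv = {u} \<Longrightarrow> (qe \<noteq> [] \<longrightarrow> col (hd qe) \<noteq> col (hd ce)) \<Longrightarrow>
    card V - length qs = n \<Longrightarrow> \<exists>C. (alt_cycle V E ends col C \<or> alt_bicycle V E ends col C) \<and> set (snd C) \<subseteq> H"
proof (induction n arbitrary: qs qe rule: less_induct)
  case (less n)
  note p = less.prems(1) and hq = less.prems(2) and dj = less.prems(3) and hc = less.prems(4) and nn = less.prems(5)
  note cf = cyc_facts[OF C1]
  have wq: "walk V E ends (qs, qe)" and Hq: "set qe \<subseteq> H" and iaq: "int_alternating col (qs, qe)" and dq: "distinct qs"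
    using p unfolding apath_def by auto
  have lq: "length qs = Suc (length qe)" by (rule walk_len[OF wq])
  have qne: "qs \<noteq> []" using lq by auto
  define ec where "ec = (if qe = [] then hd ce else last qe)"
  have ecH: "ec \<in> H" using H1 Hq cf(10) unfolding ec_def by auto
  have ecv: "last qs \<in> ends ec"
  proof (cases "qe = []")
    case True
    then have "qs = [u]" using lq hq by (cases qs) auto
    moreover have "ends (hd ce) = {cv ! 0, cv ! Suc 0}" using walk_ends[OF cf(1), of 0] cf(10) by (simp add: hd_conv_nth)
    ultimately show ?thesis using True cf(3) unfolding ec_def by simp
  next
    case False
    then show ?thesis using last_in_ends_last[OF wq] unfolding ec_def by simp
  qed
  obtain f where f: "f \<in> H" "last qs \<in> ends f" "col f \<noteq> col ec" using b ecH ecv unfolding both_def by blast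
  obtain y where y: "y \<noteq> last qs" "ends f = {last qs, y}" using other_end[OF _ f(2)] f(1) HE by blast
  have cf1: "qe = [] \<Longrightarrow> col f \<noteq> col (hd ce)" using f(3) unfolding ec_def by simp
  have cf2: "qe \<noteq> [] \<Longrightarrow> col f \<noteq> col (last qe)" using f(3) unfolding ec_def by simp
  have lastq: "last qs = qs ! length qe" using lq by (metis diff_Suc_1 last_conv_nth length_0_conv nat.distinct(1))
  consider (A) "y \<in> set qs" | (B) "y \<notin> set qs" "y \<in> set cv" | (C) "y \<notin> set qs" "y \<notin> set cv" by blast
  then show ?case
  proof cases
    case A
    then obtain l where l: "l < length qs" "qs ! l = y" by (auto simp: in_set_conv_nth)
    have "l \<noteq> length qe" using l y(1) lastq by auto
    then have l': "l < length qe" using l lq by simp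
    then have qne': "qe \<noteq> []" by auto
    have cfl: "col f \<noteq> col (last qe)" using cf2 qne' .
    note cr = cycle_result[OF p qne' f(1) HE y(2) cfl l' l(2)]
    note cc = close_cycle[OF p qne' f(1) HE y(2) cfl l' l(2)]
    define C2 where "C2 = (drop l qs @ [y], drop l qe @ [f])"
    have sH2: "set (snd C2) \<subseteq> H" using Hq f(1) unfolding C2_def by (auto dest: in_set_dropD)
    show ?thesis
    proof (cases "even (length (snd C2))")
      case True then show ?thesis using cr sH2 unfolding C2_def by blast
    next
      case False
      then have oc2: "odd_ia_cycle V E ends col C2 y" using cr unfolding C2_def by blast
      note cf2f = cyc_facts[OF oc2[unfolded C2_def]]
      define pv where "pv = take (Suc l) qs"
      define pe where "pe = take l qe"
      have wP: "walk V E ends (pv, pe)" unfolding pv_def pe_def by (rule walk_take[OF wq]) (use l' in simp)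
      have pP: "path (pv, pe)" unfolding path_def pv_def pe_def
        using path_distinct_edges[OF wq dq] dq by simp
      have hP: "hd pv = u" unfolding pv_def using hq qne by (cases qs) auto
      have lP: "last pv = y" unfolding pv_def using l by (simp add: take_Suc_conv_app_nth)
      have i1: "set cv \<inter> set pv = {u}"
      proof -
        have "set pv \<subseteq> set qs" unfolding pv_def by (rule set_take_subset)
        moreover have "u \<in> set pv" using hP unfolding pv_def by (metis hd_in_set take_eq_Nil nat.distinct(1) qne)
        ultimately show ?thesis using dj by blast
      qed
      have yd: "y \<in> set (drop l qs)" using l by (metis Cons_nth_drop_Suc list.set_intros(1))
      have i2: "set pv \<inter> set (fst C2) = {y}"
        using take_drop_inter[OF dq l(1)] yd l unfolding pv_def C2_def by auto
      have i3: "set cv \<inter> set (fst C2) \<subseteq> {u} \<inter> {y}"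
      proof (cases "l = 0")
        case True
        then have "y = u" using l hq qne by (simp add: hd_conv_nth)
        then show ?thesis using True dj unfolding C2_def by auto
      next
        case False
        have "u \<notin> set (drop l qs)"
        proof
          assume "u \<in> set (drop l qs)"
          then obtain k where k: "k < length (drop l qs)" "drop l qs ! k = u" by (auto simp: in_set_conv_nth)
          then have "qs ! (l + k) = qs ! 0" using hq qne by (simp add: hd_conv_nth)
          moreover have "l + k < length qs" "0 < length qs" using k qne by auto
          ultimately have "l + k = 0" using dq nth_eq_iff_index_eq[of qs "l + k" 0] by blast
          then show False using False by simp
        qed
        moreover have "set (drop l qs) \<subseteq> set qs" by (rule set_drop_subset)
        ultimately have "set cv \<inter> set (fst C2) = {}" using dj yd unfolding C2_def by auto
        then show ?thesis by simp
      qed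
      define W where "W = walk_concat (walk_concat (walk_concat (cv, ce) (pv, pe)) C2) (walk_rev (pv, pe))"
      have wC2: "walk V E ends (drop l qs @ [y], drop l qe @ [f])" using cc by simp
      have hC2: "hd (drop l qs @ [y]) = y" using l by (simp add: hd_drop_conv_nth)
      have wW: "walk V E ends W" unfolding W_def C2_def
        by (rule bicycle_walk[OF cf(1) wP wC2]) (use cf(6) hP lP hC2 in auto)
      have sW: "snd W = ce @ pe @ (drop l qe @ [f]) @ rev pe" unfolding W_def C2_def by (simp add: walk_concat_def walk_rev_def)
      have hce2: "hd (drop l qe @ [f]) = qe ! l" using cc by simp
      have aW': "alternating col (fst W, ce @ pe @ (drop l qe @ [f]) @ rev pe)"
      proof (rule bicycle_alt[OF cf(8)])
        show "int_alternating col (pv, pe)" unfolding pe_def by (rule int_alt_take[OF iaq])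
        show "int_alternating col (drop l qs @ [y], drop l qe @ [f])" using cc by simp
        show "ce \<noteq> []" by (rule cf(10))
        show "drop l qe @ [f] \<noteq> []" by simp
        show "col (last ce) = col (hd ce)" by (rule cf(12))
        show "col (last (drop l qe @ [f])) = col (hd (drop l qe @ [f]))" by (rule cf2f(12))
        show "pe \<noteq> [] \<Longrightarrow> col (hd pe) \<noteq> col (hd ce) \<and> col (last pe) \<noteq> col (hd (drop l qe @ [f]))"
        proof -
          assume pne: "pe \<noteq> []"
          then have l0: "l > 0" unfolding pe_def by simp
          have "hd pe = hd qe" unfolding pe_def using l0 qne' by (cases qe) auto
          moreover have "last pe = qe ! (l - 1)" unfolding pe_def using l0 l'
            by (metis Suc_pred' last_snoc take_Suc_conv_app_nth less_imp_diff_less)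
          moreover have "col (qe ! (l - 1)) \<noteq> col (qe ! l)" using iaq l0 l' unfolding int_alt_pair
            by (metis Suc_pred')
          ultimately show ?thesis using hc qne' hce2 by simp
        qed
        show "pe = [] \<Longrightarrow> col (hd ce) \<noteq> col (hd (drop l qe @ [f]))"
        proof -
          assume "pe = []"
          then have "l = 0 \<or> qe = []" unfolding pe_def by simp
          then have "l = 0" using l' by auto
          then show ?thesis using hce2 hc qne' by (simp add: hd_conv_nth)
        qed
      qed
      have aW: "alternating col W" using aW' sW by (metis prod.collapse)
      have bW: "alt_bicycle V E ends col W" unfolding alt_bicycle_def
        apply (rule exI[of _ "(cv, ce)"], rule exI[of _ "(pv, pe)"], rule exI[of _ C2], rule exI[of _ u], rule exI[of _ y])
        using C1 oc2 wP pP hP lP i1 i2 i3 wW aW unfolding W_def by simp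
      have "set (snd W) \<subseteq> H" using sW H1 sH2 Hq unfolding pe_def C2_def by (auto dest: in_set_takeD)
      then show ?thesis using bW by blast
    qed
  next
    case B
    then obtain s where s: "s < length cv" "cv ! s = y" by (auto simp: in_set_conv_nth)
    have uq: "u \<in> set qs" using hq qne by auto
    have yu: "y \<noteq> u" using B uq by auto
    have s0: "0 < s" using s yu cf(3) by (cases s) auto
    have sp: "s < length ce" using s yu cf(4) cf(2) by (metis less_Suc_eq)
    have fy: "ends f = {last qs, cv ! s}" using y(2) s by simp
    have hc': "qe \<noteq> [] \<Longrightarrow> col (hd qe) \<noteq> col (hd ce)" using hc by simp
    show ?thesis
    proof (cases "col f \<noteq> col (ce ! s)")
      case True
      from theta[OF C1 H1 HE p hq dj hc' f(1) fy s0 sp cf1 cf2 True] show ?thesis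
        by (intro exI[of _ "(qs @ drop s cv, qe @ f # drop s ce)"]) simp
    next
      case False
      note C1r = odd_cycle_rev[OF C1]
      let ?s = "length ce - s"
      have rv: "rev cv ! ?s = cv ! s" using sp cf(2) by (simp add: rev_nth)
      have re: "rev ce ! ?s = ce ! (s - 1)" using sp s0 by (simp add: rev_nth)
      have "col (ce ! (s - 1)) \<noteq> col (ce ! s)" using cf(8) s0 sp unfolding int_alt_pair by (metis Suc_pred')
      then have c3: "col f \<noteq> col (rev ce ! ?s)" using False re by simp
      have hr: "hd (rev ce) = last ce" by (simp add: hd_rev)
      have hc'': "qe \<noteq> [] \<Longrightarrow> col (hd qe) \<noteq> col (hd (rev ce))" using hc hr cf(12) by simp
      have cf1': "qe = [] \<Longrightarrow> col f \<noteq> col (hd (rev ce))" using cf1 hr cf(12) by simp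
      have H1r: "set (rev ce) \<subseteq> H" using H1 by simp
      have djr: "set qs \<inter> set (rev cv) = {u}" using dj by simp
      have fyr: "ends f = {last qs, rev cv ! ?s}" using fy rv by simp
      have s0r: "0 < ?s" "?s < length (rev ce)" using sp s0 by auto
      from theta[OF C1r H1r HE p hq djr hc'' f(1) fyr s0r cf1' cf2 c3] show ?thesis
        by (intro exI[of _ "(qs @ drop ?s (rev cv), qe @ f # drop ?s (rev ce))"]) simp
    qed
  next
    case C
    have p': "apath H (qs @ [y]) (qe @ [f])" by (rule apath_snoc[OF p f(1) HE y(2) C(1) cf2])
    have hq': "hd (qs @ [y]) = u" using hq qne by simp
    have dj': "set (qs @ [y]) \<inter> set cv = {u}" using dj C by auto
    have hc': "qe @ [f] \<noteq> [] \<longrightarrow> col (hd (qe @ [f])) \<noteq> col (hd ce)" using hc cf1 by (cases qe) auto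
    have "set (qs @ [y]) \<subseteq> V" using p' walk_verts unfolding apath_def by blast
    then have "length (qs @ [y]) \<le> card V" using p' unfolding apath_def by (intro distinct_len_V) auto
    then have "card V - length (qs @ [y]) < n" using nn by simp
    then show ?thesis using less.IH[OF _ p' hq' dj' hc'] by simp
  qed
qed

lemma exists_circuit:
  assumes b: "both H" and HE: "H \<subseteq> E" and ne: "H \<noteq> {}"
  shows "\<exists>C. (alt_cycle V E ends col C \<or> alt_bicycle V E ends col C) \<and> set (snd C) \<subseteq> H"
proof -
  obtain e0 where e0: "e0 \<in> H" using ne by blast
  obtain a b where ab: "ends e0 = {a, b}" "a \<noteq> b" using card2 e0 HE card_2_iff by (metis subsetD)
  have abV: "a \<in> V" "b \<in> V" using endsV e0 HE ab by auto
  have p: "apath H [a, b] [e0]" unfolding apath_def walk_pair int_alt_pair using e0 HE ab abV by auto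
  from phase1[OF b HE p _ refl]
  have "(\<exists>C. alt_cycle V E ends col C \<and> set (snd C) \<subseteq> H) \<or> (\<exists>C u. odd_ia_cycle V E ends col C u \<and> set (snd C) \<subseteq> H)"
    by simp
  then show ?thesis
  proof
    assume "\<exists>C. alt_cycle V E ends col C \<and> set (snd C) \<subseteq> H"
    then show ?thesis by blast
  next
    assume "\<exists>C u. odd_ia_cycle V E ends col C u \<and> set (snd C) \<subseteq> H"
    then obtain cv ce u where C1: "odd_ia_cycle V E ends col (cv, ce) u" and H1: "set ce \<subseteq> H" by force
    note cf = cyc_facts[OF C1]
    have uV: "u \<in> V" using walk_verts[OF cf(1)] cf(5) cf(2) by (metis hd_in_set length_0_conv nat.distinct(1) subsetD)
    have p0: "apath H [u] []" unfolding apath_def walk_pair int_alt_pair using uV by auto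
    have dj0: "set [u] \<inter> set cv = {u}" using cf(5) cf(2) by (cases cv) auto
    from phase2[OF b HE C1 H1 p0 _ dj0 _ refl] show ?thesis by simp
  qed
qed

end

context tcg begin

lemma bal_support: assumes "S \<subseteq> E" "\<forall>e. e \<notin> S \<longrightarrow> y e = 0"
  shows "bal y v = (\<Sum>e\<in>{e\<in>S. v \<in> ends e}. sg e * y e)"
  unfolding bal_def
  by (rule sum.mono_neutral_right) (use assms finE in auto)

lemma sg_nz: "sg e \<noteq> 0" by (simp add: sg_def)

lemma two_edge: assumes y: "y \<in> alt_cone V E ends col" "\<forall>e. e \<notin> S \<longrightarrow> y e = 0" and SE: "S \<subseteq> E" and v: "v \<in> V"
  and inc: "{e\<in>S. v \<in> ends e} = {a, b}" and ab: "a \<noteq> b" "col a \<noteq> col b"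
  shows "y a = y b"
proof -
  have "bal y v = 0" using y(1) v unfolding cone_iff by auto
  then have "sg a * y a + sg b * y b = 0" using bal_support[OF SE y(2), of v] inc ab by simp
  then have "sg a * (y a - y b) = 0" using sg_neq[OF ab(2)] by (simp add: algebra_simps)
  then show ?thesis using sg_nz by simp
qed

lemma three_edge: assumes y: "y \<in> alt_cone V E ends col" "\<forall>e. e \<notin> S \<longrightarrow> y e = 0" and SE: "S \<subseteq> E" and v: "v \<in> V"
  and inc: "{e\<in>S. v \<in> ends e} = {a, b, g}" and d: "a \<noteq> b" "a \<noteq> g" "b \<noteq> g"
  and c: "col a = col b" "col a \<noteq> col g"
  shows "y a + y b = y g"
proof -
  have "bal y v = 0" using y(1) v unfolding cone_iff by auto
  then have "sg a * y a + sg b * y b + sg g * y g = 0" using bal_support[OF SE y(2), of v] inc d by (simp add: algebra_simps)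
  moreover have "sg b = sg a" using sg_eq c by metis
  moreover have "sg g = - sg a" using sg_neq c(2) by metis
  ultimately have "sg a * (y a + y b - y g) = 0" by (simp add: algebra_simps)
  then show ?thesis using sg_nz by simp
qed

lemma four_edge: assumes y: "y \<in> alt_cone V E ends col" "\<forall>e. e \<notin> S \<longrightarrow> y e = 0" and SE: "S \<subseteq> E" and v: "v \<in> V"
  and inc: "{e\<in>S. v \<in> ends e} = {a, b, g, h}" and d: "a \<noteq> b" "a \<noteq> g" "a \<noteq> h" "b \<noteq> g" "b \<noteq> h" "g \<noteq> h"
  and c: "col a = col b" "col g = col h" "col a \<noteq> col g"
  shows "y a + y b = y g + y h"
proof -
  have "bal y v = 0" using y(1) v unfolding cone_iff by auto
  then have "sg a * y a + sg b * y b + sg g * y g + sg h * y h = 0" using bal_support[OF SE y(2), of v] inc d by (simp add: algebra_simps)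
  moreover have "sg b = sg a" using sg_eq c by metis
  moreover have "sg g = - sg a" using sg_neq c(3) by metis
  moreover have "sg h = - sg a" using sg_neq c(2,3) by metis
  ultimately have "sg a * (y a + y b - y g - y h) = 0" by (simp add: algebra_simps)
  then show ?thesis using sg_nz by simp
qed

lemma chain:
  assumes w: "walk V E ends (vs, es)" and ia: "int_alternating col (vs, es)" and de: "distinct es"
    and sS: "set es \<subseteq> S" and SE: "S \<subseteq> E" and y: "y \<in> alt_cone V E ends col" "\<forall>e. e \<notin> S \<longrightarrow> y e = 0"
    and D: "\<And>a b. 0 < a \<Longrightarrow> a < length es \<Longrightarrow> b \<le> length es \<Longrightarrow> vs ! a = vs ! b \<Longrightarrow> a = b"
    and I: "\<And>e j. e \<in> S \<Longrightarrow> 0 < j \<Longrightarrow> j < length es \<Longrightarrow> vs ! j \<in> ends e \<Longrightarrow> e \<in> set es"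
  shows "j < length es \<Longrightarrow> y (es ! j) = y (es ! 0)"
proof (induction j)
  case 0 then show ?case by simp
next
  case (Suc j)
  have l: "length vs = Suc (length es)" by (rule walk_len[OF w])
  have vV: "vs ! Suc j \<in> V" using walk_verts[OF w] Suc.prems l by auto
  have inc: "{e\<in>S. vs ! Suc j \<in> ends e} = {es ! j, es ! Suc j}"
  proof
    show "{e\<in>S. vs ! Suc j \<in> ends e} \<subseteq> {es ! j, es ! Suc j}"
    proof
      fix e assume e: "e \<in> {e\<in>S. vs ! Suc j \<in> ends e}"
      then have "e \<in> set es" using I[of e "Suc j"] Suc.prems by auto
      then obtain k where k: "k < length es" "es ! k = e" by (auto simp: in_set_conv_nth)
      have "vs ! Suc j \<in> {vs ! k, vs ! Suc k}" using walk_ends[OF w k(1)] k(2) e by auto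
      then have "Suc j = k \<or> Suc j = Suc k" using D[of "Suc j" k] D[of "Suc j" "Suc k"] Suc.prems k(1) by auto
      then show "e \<in> {es ! j, es ! Suc j}" using k(2) by auto
    qed
    show "{es ! j, es ! Suc j} \<subseteq> {e\<in>S. vs ! Suc j \<in> ends e}"
      using walk_ends[OF w, of j] walk_ends[OF w, of "Suc j"] Suc.prems sS by auto
  qed
  have ne: "es ! j \<noteq> es ! Suc j" using de Suc.prems by (simp add: nth_eq_iff_index_eq)
  have cn: "col (es ! j) \<noteq> col (es ! Suc j)" using ia Suc.prems unfolding int_alt_pair by auto
  have "y (es ! j) = y (es ! Suc j)" by (rule two_edge[OF y SE vV inc ne cn])
  then show ?case using Suc by simp
qed

lemma count_distinct: "distinct xs \<Longrightarrow> x \<in> set xs \<Longrightarrow> count_list xs x = 1"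
  by (induction xs) auto

lemma cycle_extreme:
  assumes C: "alt_cycle V E ends col (cv, ce)" and y: "y \<in> alt_cone V E ends col" "\<forall>e. e \<notin> set ce \<longrightarrow> y e = 0"
  shows "y = (\<lambda>e. y (ce ! 0) * chi (cv, ce) e)"
proof -
  have w: "walk V E ends (cv, ce)" and cy: "cycle (cv, ce)" and al: "alternating col (cv, ce)"
    using C unfolding alt_cycle_def by auto
  have l: "length cv = Suc (length ce)" by (rule walk_len[OF w])
  have cl: "hd cv = last cv" and de: "distinct ce" and db: "distinct (butlast cv)" and ne: "ce \<noteq> []"
    using cy unfolding cycle_def closed_walk_def by auto
  have ia: "int_alternating col (cv, ce)" using al unfolding alternating_def by auto
  have SE: "set ce \<subseteq> E" using walk_edge_in[OF w] by auto
  have lastv: "cv ! length ce = cv ! 0" using cl l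
    by (metis diff_Suc_1 hd_conv_nth last_conv_nth length_0_conv nat.distinct(1))
  have idx: "a = b" if "a < length ce" "b < length ce" "cv ! a = cv ! b" for a b
  proof -
    have "butlast cv ! a = butlast cv ! b" using that l by (simp add: nth_butlast)
    then show ?thesis using db that l by (simp add: nth_eq_iff_index_eq)
  qed
  have D: "a = b" if "0 < a" "a < length ce" "b \<le> length ce" "cv ! a = cv ! b" for a b
  proof (cases "b = length ce")
    case True
    then have "cv ! a = cv ! 0" using that lastv by simp
    then have "a = 0" using idx[of a 0] that ne by simp
    then show ?thesis using that by simp
  next
    case False then show ?thesis using idx that by simp
  qed
  have I: "e \<in> set ce" if "e \<in> set ce" for e using that .
  have eq: "y (ce ! j) = y (ce ! 0)" if "j < length ce" for j
    by (rule chain[OF w ia de subset_refl SE y D I that]) auto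
  show ?thesis
  proof
    fix e
    show "y e = y (ce ! 0) * chi (cv, ce) e"
    proof (cases "e \<in> set ce")
      case True
      then obtain j where "j < length ce" "ce ! j = e" by (auto simp: in_set_conv_nth)
      then show ?thesis using eq count_distinct[OF de True] by (auto simp: chi_def)
    next
      case False
      then show ?thesis using y(2) by (simp add: chi_def)
    qed
  qed
qed

end

lemma int_alt_mid: "int_alternating col (vs, xs @ ys @ zs) \<Longrightarrow> int_alternating col (vs', ys)"
proof -
  assume a: "int_alternating col (vs, xs @ ys @ zs)"
  have "ys = take (length ys) (drop (length xs) (xs @ ys @ zs))" by simp
  moreover have "int_alternating col (vs', take (length ys) (drop (length xs) (xs @ ys @ zs)))"
    by (rule int_alt_take, rule int_alt_drop, rule a)
  ultimately show ?thesis by metis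
qed

context tcg begin

lemma cyc_more: assumes C: "odd_ia_cycle V E ends col (cv, ce) u"
  shows "\<And>j. 0 < j \<Longrightarrow> j < length ce \<Longrightarrow> cv ! j \<noteq> u"
    and "\<And>a b. 0 < a \<Longrightarrow> a < length ce \<Longrightarrow> b \<le> length ce \<Longrightarrow> cv ! a = cv ! b \<Longrightarrow> a = b"
    and "\<And>e. e \<in> set ce \<Longrightarrow> u \<in> ends e \<Longrightarrow> e = ce ! 0 \<or> e = ce ! (length ce - 1)"
    and "u \<in> ends (ce ! 0)" "u \<in> ends (ce ! (length ce - 1))"
    and "ce ! 0 \<noteq> ce ! (length ce - 1)"
    and "ce ! 0 \<in> set ce" "ce ! (length ce - 1) \<in> set ce"
proof -
  note cf = cyc_facts[OF C]
  show nb: "\<And>j. 0 < j \<Longrightarrow> j < length ce \<Longrightarrow> cv ! j \<noteq> u"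
    using cf(3) cf(10) cf(11) by (metis less_numeral_extra(3) length_greater_0_conv)
  show D: "\<And>a b. 0 < a \<Longrightarrow> a < length ce \<Longrightarrow> b \<le> length ce \<Longrightarrow> cv ! a = cv ! b \<Longrightarrow> a = b"
  proof -
    fix a b assume ab: "0 < a" "a < length ce" "b \<le> length ce" "cv ! a = cv ! b"
    show "a = b"
    proof (cases "b = length ce")
      case True then show ?thesis using ab nb cf(4) by auto
    next
      case False then show ?thesis using ab cf(11) by simp
    qed
  qed
  show "u \<in> ends (ce ! 0)" using walk_ends[OF cf(1), of 0] cf(10) cf(3) by simp
  show "u \<in> ends (ce ! (length ce - 1))" using walk_ends[OF cf(1), of "length ce - 1"] cf(10) cf(4) by simp
  show "\<And>e. e \<in> set ce \<Longrightarrow> u \<in> ends e \<Longrightarrow> e = ce ! 0 \<or> e = ce ! (length ce - 1)"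
  proof -
    fix e assume e: "e \<in> set ce" "u \<in> ends e"
    then obtain k where k: "k < length ce" "ce ! k = e" by (auto simp: in_set_conv_nth)
    have "u = cv ! k \<or> u = cv ! Suc k" using walk_ends[OF cf(1) k(1)] k(2) e(2) by auto
    then show "e = ce ! 0 \<or> e = ce ! (length ce - 1)"
    proof
      assume "u = cv ! k"
      then have "k = 0" using nb[of k] k by (cases k) auto
      then show ?thesis using k by simp
    next
      assume "u = cv ! Suc k"
      then have "Suc k = length ce" using nb[of "Suc k"] k by (metis Suc_lessI zero_less_Suc)
      then have "k = length ce - 1" by simp
      then show ?thesis using k by simp
    qed
  qed
  have "length ce \<noteq> 1"
  proof
    assume "length ce = 1"
    then have "cv ! 0 = cv ! Suc 0" using cf(3) cf(4) by simp
    then show False using walk_neq[OF cf(1), of 0] cf(10) by simp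
  qed
  moreover have "length ce > 0" using cf(10) by simp
  ultimately have "0 \<noteq> length ce - 1" "length ce - 1 < length ce" by linarith+
  then show "ce ! 0 \<noteq> ce ! (length ce - 1)" using cf(7) cf(10) nth_eq_iff_index_eq[of ce 0 "length ce - 1"]
    by auto
  show "ce ! 0 \<in> set ce" "ce ! (length ce - 1) \<in> set ce" using cf(10) by auto
qed

lemma path_end_inc: assumes w: "walk V E ends (pv, pe)" and d: "distinct pv" and e: "e \<in> set pe"
  shows "pv ! 0 \<in> ends e \<Longrightarrow> e = pe ! 0" and "pv ! length pe \<in> ends e \<Longrightarrow> e = pe ! (length pe - 1)"
proof -
  have l: "length pv = Suc (length pe)" by (rule walk_len[OF w])
  obtain k where k: "k < length pe" "pe ! k = e" using e by (auto simp: in_set_conv_nth)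
  have en: "ends e = {pv ! k, pv ! Suc k}" using walk_ends[OF w k(1)] k(2) by simp
  show "pv ! 0 \<in> ends e \<Longrightarrow> e = pe ! 0"
  proof -
    assume "pv ! 0 \<in> ends e"
    then have "pv ! 0 = pv ! k \<or> pv ! 0 = pv ! Suc k" using en by auto
    then have "0 = k \<or> 0 = Suc k" using d k l nth_eq_iff_index_eq[of pv 0 k] nth_eq_iff_index_eq[of pv 0 "Suc k"] by auto
    then show "e = pe ! 0" using k by auto
  qed
  show "pv ! length pe \<in> ends e \<Longrightarrow> e = pe ! (length pe - 1)"
  proof -
    assume "pv ! length pe \<in> ends e"
    then have "pv ! length pe = pv ! k \<or> pv ! length pe = pv ! Suc k" using en by auto
    then have "length pe = k \<or> length pe = Suc k" using d k l nth_eq_iff_index_eq[of pv "length pe" k] nth_eq_iff_index_eq[of pv "length pe" "Suc k"] by auto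
    then show "e = pe ! (length pe - 1)" using k by auto
  qed
qed

end

context tcg begin

lemma bicycle_extreme:
  assumes C: "alt_bicycle V E ends col W" and y: "y \<in> alt_cone V E ends col" "\<forall>e. e \<notin> set (snd W) \<longrightarrow> y e = 0"
  shows "\<exists>\<alpha>. y = (\<lambda>e. \<alpha> * chi W e)"
proof -
  obtain W1 P W2 u w where
    o1: "odd_ia_cycle V E ends col W1 u" and o2: "odd_ia_cycle V E ends col W2 w" and
    wP: "walk V E ends P" and pP: "path P" and hP: "hd (fst P) = u" and lP: "last (fst P) = w" and
    i1: "set (fst W1) \<inter> set (fst P) = {u}" and i2: "set (fst P) \<inter> set (fst W2) = {w}" and
    i3: "set (fst W1) \<inter> set (fst W2) \<subseteq> {u} \<inter> {w}" and
    Wd: "W = walk_concat (walk_concat (walk_concat W1 P) W2) (walk_rev P)" and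
    aW: "alternating col W"
    using C unfolding alt_bicycle_def by blast
  obtain cv1 ce1 where W1: "W1 = (cv1, ce1)" by (cases W1)
  obtain pv pe where P: "P = (pv, pe)" by (cases P)
  obtain cv2 ce2 where W2: "W2 = (cv2, ce2)" by (cases W2)
  have o1': "odd_ia_cycle V E ends col (cv1, ce1) u" using o1 W1 by simp
  have o2': "odd_ia_cycle V E ends col (cv2, ce2) w" using o2 W2 by simp
  note c1 = cyc_facts[OF o1'] and m1 = cyc_more[OF o1']
  note c2 = cyc_facts[OF o2'] and m2 = cyc_more[OF o2']
  have wP': "walk V E ends (pv, pe)" using wP P by simp
  have dpv: "distinct pv" and dpe: "distinct pe" using pP P unfolding path_def by auto
  have lp: "length pv = Suc (length pe)" by (rule walk_len[OF wP'])
  have pv0: "pv ! 0 = u" using hP P lp by (cases pv) auto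
  have pvq: "pv ! length pe = w" using lP P lp by (metis diff_Suc_1 fst_conv last_conv_nth length_0_conv nat.distinct(1))
  have i1': "set cv1 \<inter> set pv = {u}" using i1 W1 P by simp
  have i2': "set pv \<inter> set cv2 = {w}" using i2 W2 P by simp
  have i3': "set cv1 \<inter> set cv2 \<subseteq> {u} \<inter> {w}" using i3 W1 W2 by simp
  have sW: "snd W = ce1 @ pe @ ce2 @ rev pe" using Wd W1 W2 P by (simp add: walk_concat_def walk_rev_def)
  define S where "S = set (snd W)"
  have S: "S = set ce1 \<union> set pe \<union> set ce2" unfolding S_def sW by auto
  have SE: "S \<subseteq> E" unfolding S using walk_edge_in[OF c1(1)] walk_edge_in[OF wP'] walk_edge_in[OF c2(1)] by blast
  have yS: "\<forall>e. e \<notin> S \<longrightarrow> y e = 0" using y(2) unfolding S_def .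
  have iaW: "int_alternating col (fst W, ce1 @ pe @ ce2 @ rev pe)" using aW sW unfolding alternating_def by (metis prod.collapse)
  have d12: "set ce1 \<inter> set pe = {}" using no_common_edge[OF c1(1) wP', of u] i1' by simp
  have d23: "set pe \<inter> set ce2 = {}" using no_common_edge[OF wP' c2(1), of w] i2' by simp
  have d13: "set ce1 \<inter> set ce2 = {}" using no_common_edge[OF c1(1) c2(1), of u] i3' by auto
  have uV: "u \<in> V" using walk_verts[OF c1(1)] c1(5) c1(2) by (metis hd_in_set length_0_conv nat.distinct(1) subsetD)
  have wV: "w \<in> V" using walk_verts[OF c2(1)] c2(5) c2(2) by (metis hd_in_set length_0_conv nat.distinct(1) subsetD)
  have ch1: "y (ce1 ! j) = y (ce1 ! 0)" if "j < length ce1" for j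
  proof (rule chain[OF c1(1) c1(8) c1(7) _ SE y(1) yS m1(2) _ that])
    show "set ce1 \<subseteq> S" unfolding S by auto
    fix e j assume e: "e \<in> S" "0 < j" "j < length ce1" "cv1 ! j \<in> ends e"
    have cj: "cv1 ! j \<in> set cv1" using e(3) c1(2) by auto
    have nu: "cv1 ! j \<noteq> u" using m1(1) e(2,3) by auto
    show "e \<in> set ce1"
    proof (rule ccontr)
      assume "e \<notin> set ce1"
      then have "e \<in> set pe \<or> e \<in> set ce2" using e(1) unfolding S by auto
      then show False
      proof
        assume "e \<in> set pe"
        then have "cv1 ! j \<in> set pv" using edge_in_ends[OF wP'] e(4) by blast
        then show False using cj nu i1' by blast
      next
        assume "e \<in> set ce2"
        then have "cv1 ! j \<in> set cv2" using edge_in_ends[OF c2(1)] e(4) by blast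
        then show False using cj nu i3' by blast
      qed
    qed
  qed
  have ch2: "y (ce2 ! j) = y (ce2 ! 0)" if "j < length ce2" for j
  proof (rule chain[OF c2(1) c2(8) c2(7) _ SE y(1) yS m2(2) _ that])
    show "set ce2 \<subseteq> S" unfolding S by auto
    fix e j assume e: "e \<in> S" "0 < j" "j < length ce2" "cv2 ! j \<in> ends e"
    have cj: "cv2 ! j \<in> set cv2" using e(3) c2(2) by auto
    have nw: "cv2 ! j \<noteq> w" using m2(1) e(2,3) by auto
    show "e \<in> set ce2"
    proof (rule ccontr)
      assume "e \<notin> set ce2"
      then have "e \<in> set pe \<or> e \<in> set ce1" using e(1) unfolding S by auto
      then show False
      proof
        assume "e \<in> set pe"
        then have "cv2 ! j \<in> set pv" using edge_in_ends[OF wP'] e(4) by blast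
        then show False using cj nw i2' by blast
      next
        assume "e \<in> set ce1"
        then have "cv2 ! j \<in> set cv1" using edge_in_ends[OF c1(1)] e(4) by blast
        then show False using cj nw i3' by blast
      qed
    qed
  qed
  have chP: "y (pe ! j) = y (pe ! 0)" if "j < length pe" for j
  proof (rule chain[OF wP' int_alt_mid[OF iaW] dpe _ SE y(1) yS _ _ that])
    show "set pe \<subseteq> S" unfolding S by auto
    fix a b assume ab: "0 < a" "a < length pe" "b \<le> length pe" "pv ! a = pv ! b"
    then show "a = b" using dpv lp nth_eq_iff_index_eq[of pv a b] by simp
  next
    fix e j assume e: "e \<in> S" "0 < j" "j < length pe" "pv ! j \<in> ends e"
    have pj: "pv ! j \<in> set pv" using e(3) lp by auto
    have nu: "pv ! j \<noteq> u" using pv0 dpv e(2,3) lp nth_eq_iff_index_eq[of pv j 0] by auto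
    have nw: "pv ! j \<noteq> w" using pvq dpv e(2,3) lp nth_eq_iff_index_eq[of pv j "length pe"] by auto
    show "e \<in> set pe"
    proof (rule ccontr)
      assume "e \<notin> set pe"
      then have "e \<in> set ce1 \<or> e \<in> set ce2" using e(1) unfolding S by auto
      then show False
      proof
        assume "e \<in> set ce1"
        then have "pv ! j \<in> set cv1" using edge_in_ends[OF c1(1)] e(4) by blast
        then show False using pj nu i1' by blast
      next
        assume "e \<in> set ce2"
        then have "pv ! j \<in> set cv2" using edge_in_ends[OF c2(1)] e(4) by blast
        then show False using pj nw i2' by blast
      qed
    qed
  qed
  let ?p1 = "length ce1" and ?p2 = "length ce2" and ?q = "length pe"
  have p1: "?p1 > 0" "?p2 > 0" using c1(10) c2(10) by auto
  have col1: "col (ce1 ! 0) = col (ce1 ! (?p1 - 1))" using c1(12) c1(10) by (simp add: hd_conv_nth last_conv_nth)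
  have col2: "col (ce2 ! 0) = col (ce2 ! (?p2 - 1))" using c2(12) c2(10) by (simp add: hd_conv_nth last_conv_nth)
  have al1: "col ((ce1 @ pe @ ce2 @ rev pe) ! (?p1 - 1)) \<noteq> col ((ce1 @ pe @ ce2 @ rev pe) ! ?p1)"
  proof -
    have "Suc (?p1 - 1) < length (ce1 @ pe @ ce2 @ rev pe)" using p1 by simp
    from iaW[unfolded int_alt_pair, rule_format, OF this] show ?thesis using p1 by simp
  qed
  have L1: "(ce1 @ pe @ ce2 @ rev pe) ! (?p1 - 1) = ce1 ! (?p1 - 1)" using p1 by (simp add: nth_append)
  have y1: "y (ce1 ! (?p1 - 1)) = y (ce1 ! 0)" using ch1[of "?p1 - 1"] p1 by simp
  have y2: "y (ce2 ! (?p2 - 1)) = y (ce2 ! 0)" using ch2[of "?p2 - 1"] p1 by simp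
  have ce1S: "ce1 ! 0 \<in> S" "ce1 ! (?p1 - 1) \<in> S" using m1(7,8) unfolding S by auto
  have ce2S: "ce2 ! 0 \<in> S" "ce2 ! (?p2 - 1) \<in> S" using m2(7,8) unfolding S by auto
  define \<alpha> where "\<alpha> = y (ce1 ! 0)"
  have main: "y (ce2 ! 0) = \<alpha> \<and> (pe \<noteq> [] \<longrightarrow> y (pe ! 0) = 2 * \<alpha>)"
  proof (cases "pe = []")
    case True
    have uw: "u = w" using pv0 pvq True by simp
    have incu: "{e\<in>S. u \<in> ends e} = {ce1 ! 0, ce1 ! (?p1 - 1), ce2 ! 0, ce2 ! (?p2 - 1)}"
    proof (intro equalityI subsetI)
      fix e assume e: "e \<in> {e\<in>S. u \<in> ends e}"
      then have "e \<in> set ce1 \<or> e \<in> set ce2" using True unfolding S by auto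
      then show "e \<in> {ce1 ! 0, ce1 ! (?p1 - 1), ce2 ! 0, ce2 ! (?p2 - 1)}"
        using m1(3)[of e] m2(3)[of e] e uw by auto
    next
      fix e assume "e \<in> {ce1 ! 0, ce1 ! (?p1 - 1), ce2 ! 0, ce2 ! (?p2 - 1)}"
      then show "e \<in> {e\<in>S. u \<in> ends e}" using ce1S ce2S m1(4,5) m2(4,5) uw by auto
    qed
    have L2: "(ce1 @ pe @ ce2 @ rev pe) ! ?p1 = ce2 ! 0" using True p1 by (simp add: nth_append)
    have "y (ce1 ! 0) + y (ce1 ! (?p1 - 1)) = y (ce2 ! 0) + y (ce2 ! (?p2 - 1))"
    proof (rule four_edge[OF y(1) yS SE uV incu])
      show "ce1 ! 0 \<noteq> ce1 ! (?p1 - 1)" by (rule m1(6))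
      show "ce2 ! 0 \<noteq> ce2 ! (?p2 - 1)" by (rule m2(6))
      show "ce1 ! 0 \<noteq> ce2 ! 0" "ce1 ! 0 \<noteq> ce2 ! (?p2 - 1)" "ce1 ! (?p1 - 1) \<noteq> ce2 ! 0" "ce1 ! (?p1 - 1) \<noteq> ce2 ! (?p2 - 1)"
        using d13 m1(7,8) m2(7,8) by auto
      show "col (ce1 ! 0) = col (ce1 ! (?p1 - 1))" by (rule col1)
      show "col (ce2 ! 0) = col (ce2 ! (?p2 - 1))" by (rule col2)
      show "col (ce1 ! 0) \<noteq> col (ce2 ! 0)" using al1 L1 L2 col1 by simp
    qed
    then show ?thesis using y1 y2 True unfolding \<alpha>_def by simp
  next
    case False
    then have q: "?q > 0" by simp
    have pe0S: "pe ! 0 \<in> S" "pe ! (?q - 1) \<in> S" using q unfolding S by auto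
    have uwn: "u \<noteq> w" using pv0 pvq dpv q lp nth_eq_iff_index_eq[of pv 0 ?q] by auto
    have incu: "{e\<in>S. u \<in> ends e} = {ce1 ! 0, ce1 ! (?p1 - 1), pe ! 0}"
    proof (intro equalityI subsetI)
      fix e assume e: "e \<in> {e\<in>S. u \<in> ends e}"
      then have "e \<in> set ce1 \<or> e \<in> set pe \<or> e \<in> set ce2" unfolding S by auto
      moreover have "e \<notin> set ce2"
      proof
        assume "e \<in> set ce2"
        then have "u \<in> set cv2" using edge_in_ends[OF c2(1)] e by blast
        moreover have "u \<in> set pv" using pv0 lp by (metis nth_mem zero_less_Suc)
        ultimately have "u \<in> set pv \<inter> set cv2" by blast
        then show False using i2' uwn by simp
      qed
      ultimately show "e \<in> {ce1 ! 0, ce1 ! (?p1 - 1), pe ! 0}"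
        using m1(3)[of e] path_end_inc(1)[OF wP' dpv, of e] e pv0 by auto
    next
      fix e assume "e \<in> {ce1 ! 0, ce1 ! (?p1 - 1), pe ! 0}"
      moreover have "u \<in> ends (pe ! 0)" using walk_ends[OF wP', of 0] q pv0 by simp
      ultimately show "e \<in> {e\<in>S. u \<in> ends e}" using ce1S pe0S m1(4,5) by auto
    qed
    have L2: "(ce1 @ pe @ ce2 @ rev pe) ! ?p1 = pe ! 0" using q p1 by (simp add: nth_append)
    have "y (ce1 ! 0) + y (ce1 ! (?p1 - 1)) = y (pe ! 0)"
    proof (rule three_edge[OF y(1) yS SE uV incu])
      show "ce1 ! 0 \<noteq> ce1 ! (?p1 - 1)" by (rule m1(6))
      have "pe ! 0 \<in> set pe" using q by simp
      then show "ce1 ! 0 \<noteq> pe ! 0" "ce1 ! (?p1 - 1) \<noteq> pe ! 0" using d12 m1(7,8) by auto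
      show "col (ce1 ! 0) = col (ce1 ! (?p1 - 1))" by (rule col1)
      show "col (ce1 ! 0) \<noteq> col (pe ! 0)" using al1 L1 L2 col1 by simp
    qed
    then have eu: "y (pe ! 0) = 2 * \<alpha>" using y1 unfolding \<alpha>_def by simp
    have incw: "{e\<in>S. w \<in> ends e} = {ce2 ! 0, ce2 ! (?p2 - 1), pe ! (?q - 1)}"
    proof (intro equalityI subsetI)
      fix e assume e: "e \<in> {e\<in>S. w \<in> ends e}"
      then have "e \<in> set ce1 \<or> e \<in> set pe \<or> e \<in> set ce2" unfolding S by auto
      moreover have "e \<notin> set ce1"
      proof
        assume "e \<in> set ce1"
        then have "w \<in> set cv1" using edge_in_ends[OF c1(1)] e by blast
        moreover have "w \<in> set pv" using pvq lp by (metis nth_mem lessI)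
        ultimately have "w \<in> set cv1 \<inter> set pv" by blast
        then show False using i1' uwn by simp
      qed
      ultimately show "e \<in> {ce2 ! 0, ce2 ! (?p2 - 1), pe ! (?q - 1)}"
        using m2(3)[of e] path_end_inc(2)[OF wP' dpv, of e] e pvq by auto
    next
      fix e assume "e \<in> {ce2 ! 0, ce2 ! (?p2 - 1), pe ! (?q - 1)}"
      moreover have "w \<in> ends (pe ! (?q - 1))" using walk_ends[OF wP', of "?q - 1"] q pvq by simp
      ultimately show "e \<in> {e\<in>S. w \<in> ends e}" using ce2S pe0S m2(4,5) by auto
    qed
    have al2: "col ((ce1 @ pe @ ce2 @ rev pe) ! (?p1 + ?q - 1)) \<noteq> col ((ce1 @ pe @ ce2 @ rev pe) ! (?p1 + ?q))"
    proof -
      have "Suc (?p1 + ?q - 1) < length (ce1 @ pe @ ce2 @ rev pe)" using p1 q by simp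
      from iaW[unfolded int_alt_pair, rule_format, OF this] show ?thesis using p1 q by simp
    qed
    have L3: "(ce1 @ pe @ ce2 @ rev pe) ! (?p1 + ?q - 1) = pe ! (?q - 1)"
    proof -
      have "?p1 + ?q - 1 = ?p1 + (?q - 1)" using q by arith
      then have "(ce1 @ pe @ ce2 @ rev pe) ! (?p1 + ?q - 1) = (pe @ ce2 @ rev pe) ! (?q - 1)"
        by (simp only: nth_append_length_plus)
      also have "\<dots> = pe ! (?q - 1)" using q by (simp add: nth_append)
      finally show ?thesis .
    qed
    have L4: "(ce1 @ pe @ ce2 @ rev pe) ! (?p1 + ?q) = ce2 ! 0" using q p1 by (simp add: nth_append)
    have "y (ce2 ! 0) + y (ce2 ! (?p2 - 1)) = y (pe ! (?q - 1))"
    proof (rule three_edge[OF y(1) yS SE wV incw])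
      show "ce2 ! 0 \<noteq> ce2 ! (?p2 - 1)" by (rule m2(6))
      have "pe ! (?q - 1) \<in> set pe" using q by simp
      then show "ce2 ! 0 \<noteq> pe ! (?q - 1)" "ce2 ! (?p2 - 1) \<noteq> pe ! (?q - 1)" using d23 m2(7,8) by auto
      show "col (ce2 ! 0) = col (ce2 ! (?p2 - 1))" by (rule col2)
      show "col (ce2 ! 0) \<noteq> col (pe ! (?q - 1))" using al2 L3 L4 by simp
    qed
    moreover have "y (pe ! (?q - 1)) = y (pe ! 0)" using chP[of "?q - 1"] q by simp
    ultimately have "y (ce2 ! 0) = \<alpha>" using eu y2 by simp
    then show ?thesis using eu by simp
  qed
  show ?thesis
  proof (intro exI[of _ \<alpha>] ext)
    fix e
    have cnt: "chi W e = real (count_list ce1 e + count_list pe e + count_list ce2 e + count_list pe e)"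
      unfolding chi_def sW by simp
    consider (a) "e \<in> set ce1" | (b) "e \<in> set pe" | (c) "e \<in> set ce2" | (d) "e \<notin> S" unfolding S by auto
    then show "y e = \<alpha> * chi W e"
    proof cases
      case a
      then obtain j where j: "j < ?p1" "ce1 ! j = e" by (auto simp: in_set_conv_nth)
      have "e \<notin> set pe" "e \<notin> set ce2" using a d12 d13 by auto
      then have "chi W e = 1" using cnt count_distinct[OF c1(7) a] by simp
      then show ?thesis using ch1[OF j(1)] j(2) unfolding \<alpha>_def by simp
    next
      case b
      then obtain j where j: "j < ?q" "pe ! j = e" by (auto simp: in_set_conv_nth)
      have "e \<notin> set ce1" "e \<notin> set ce2" using b d12 d23 by auto
      then have "chi W e = 2" using cnt count_distinct[OF dpe b] by simp
      then show ?thesis using chP[OF j(1)] j(2) main b by auto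
    next
      case c
      then obtain j where j: "j < ?p2" "ce2 ! j = e" by (auto simp: in_set_conv_nth)
      have "e \<notin> set pe" "e \<notin> set ce1" using c d23 d13 by auto
      then have "chi W e = 1" using cnt count_distinct[OF c2(7) c] by simp
      then show ?thesis using ch2[OF j(1)] j(2) main by simp
    next
      case d
      then have "chi W e = 0" using cnt unfolding S by simp
      then show ?thesis using yS d by simp
    qed
  qed
qed

end

context tcg begin

lemma circ_CAW: assumes "alt_cycle V E ends col W \<or> alt_bicycle V E ends col W" shows "CAW V E ends col W"
  using assms
proof
  assume "alt_cycle V E ends col W"
  then show ?thesis unfolding alt_cycle_def CAW_def cycle_def by auto
next
  assume C: "alt_bicycle V E ends col W"
  obtain W1 P W2 u w where
    o1: "odd_ia_cycle V E ends col W1 u" and o2: "odd_ia_cycle V E ends col W2 w" and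
    wP: "walk V E ends P" and hP: "hd (fst P) = u" and lP: "last (fst P) = w" and
    Wd: "W = walk_concat (walk_concat (walk_concat W1 P) W2) (walk_rev P)" and
    wW: "walk V E ends W" and aW: "alternating col W"
    using C unfolding alt_bicycle_def by blast
  obtain cv1 ce1 where W1: "W1 = (cv1, ce1)" by (cases W1)
  obtain pv pe where P: "P = (pv, pe)" by (cases P)
  obtain cv2 ce2 where W2: "W2 = (cv2, ce2)" by (cases W2)
  have o1': "odd_ia_cycle V E ends col (cv1, ce1) u" using o1 W1 by simp
  have o2': "odd_ia_cycle V E ends col (cv2, ce2) w" using o2 W2 by simp
  note c1 = cyc_facts[OF o1'] and c2 = cyc_facts[OF o2']
  have wP': "walk V E ends (pv, pe)" using wP P by simp
  have ne: "cv1 \<noteq> []" "pv \<noteq> []" "cv2 \<noteq> []" using walk_len c1(1) wP' c2(1) by (metis length_0_conv nat.distinct(1))+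
  have hp: "hd pv = u" "last pv = w" using hP lP P by auto
  have fW: "fst W = ((cv1 @ tl pv) @ tl cv2) @ tl (rev pv)" using Wd W1 W2 P by (simp add: walk_concat_def walk_rev_def)
  have sW: "snd W = ce1 @ pe @ ce2 @ rev pe" using Wd W1 W2 P by (simp add: walk_concat_def walk_rev_def)
  have l1: "last (cv1 @ tl pv) = w" using last_concat_v[OF ne(2) ne(1)] c1(6) hp by simp
  have l2: "last ((cv1 @ tl pv) @ tl cv2) = w" using last_concat_v[of cv2 "cv1 @ tl pv"] l1 ne c2(5) c2(6) by simp
  have l3: "last (((cv1 @ tl pv) @ tl cv2) @ tl (rev pv)) = u"
    using last_concat_v[of "rev pv" "(cv1 @ tl pv) @ tl cv2"] l2 ne hp by (simp add: hd_rev last_rev)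
  have "hd (fst W) = u" using fW ne c1(5) by simp
  then have "closed_walk W" unfolding closed_walk_def using l3 fW by simp
  then show ?thesis unfolding CAW_def using wW aW sW c1(10) by simp
qed

lemma circ_extreme: assumes C: "alt_cycle V E ends col W \<or> alt_bicycle V E ends col W"
  and y: "y \<in> alt_cone V E ends col" "\<forall>e. e \<notin> set (snd W) \<longrightarrow> y e = 0"
  shows "\<exists>\<alpha>. y = (\<lambda>e. \<alpha> * chi W e)"
  using C
proof
  assume "alt_cycle V E ends col W"
  then show ?thesis using cycle_extreme[of "fst W" "snd W" y] y by auto
next
  assume "alt_bicycle V E ends col W"
  then show ?thesis using bicycle_extreme y by blast
qed

lemma CAW_hd: assumes "CAW V E ends col W" shows "chi W (hd (snd W)) \<ge> 1"
proof -
  have "snd W \<noteq> []" using assms unfolding CAW_def by auto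
  then have "count_list (snd W) (hd (snd W)) \<ge> 1" by (metis count_list_0_iff hd_in_set less_one not_less)
  then show ?thesis by (simp add: chi_def)
qed

lemma both_support: assumes x: "x \<in> alt_cone V E ends col" shows "both {e\<in>E. x e > 0}"
  unfolding both_def
proof (intro allI impI)
  fix v e assume ev: "e \<in> {e\<in>E. x e > 0} \<and> v \<in> ends e"
  have vV: "v \<in> V" using ev endsV by blast
  have x0: "\<forall>e\<in>E. 0 \<le> x e" and bal0: "bal x v = 0" using x vV unfolding cone_iff by auto
  let ?R = "{e\<in>E. v \<in> ends e \<and> col e = R}" and ?B = "{e\<in>E. v \<in> ends e \<and> col e = B}"
  have eq: "(\<Sum>e\<in>?R. x e) = (\<Sum>e\<in>?B. x e)" using bal0 bal_split[of x v] by simp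
  have fR: "finite ?R" "finite ?B" using finE by auto
  show "\<exists>f\<in>{e\<in>E. x e > 0}. v \<in> ends f \<and> col f \<noteq> col e"
  proof (cases "col e")
    case R
    have "x e \<le> (\<Sum>e\<in>?R. x e)" using ev R x0 by (intro member_le_sum) (auto simp: fR)
    then have "(\<Sum>e\<in>?B. x e) > 0" using eq ev by simp
    then obtain f where "f \<in> ?B" "x f > 0"
      by (metis (no_types, lifting) not_le sum_nonpos)
    then show ?thesis using R by auto
  next
    case B
    have "x e \<le> (\<Sum>e\<in>?B. x e)" using ev B x0 by (intro member_le_sum) (auto simp: fR)
    then have "(\<Sum>e\<in>?R. x e) > 0" using eq ev by simp
    then obtain f where "f \<in> ?R" "x f > 0"
      by (metis (no_types, lifting) not_le sum_nonpos)
    then show ?thesis using B by auto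
  qed
qed

lemma sub_ray: assumes C: "alt_cycle V E ends col W \<or> alt_bicycle V E ends col W" and t: "t > 0"
  and y: "y \<in> alt_cone V E ends col" and z: "z \<in> alt_cone V E ends col"
  and s: "(\<lambda>e. y e + z e) = (\<lambda>e. s * (t * chi W e))" "s \<ge> 0"
  shows "y \<in> ray (\<lambda>e. t * chi W e)"
proof -
  have cw: "CAW V E ends col W" by (rule circ_CAW[OF C])
  have z0: "z e \<ge> 0" for e using z unfolding cone_iff by (cases "e \<in> E") auto
  have y0: "y e \<ge> 0" for e using y unfolding cone_iff by (cases "e \<in> E") auto
  have ys: "\<forall>e. e \<notin> set (snd W) \<longrightarrow> y e = 0"
  proof (intro allI impI)
    fix e assume "e \<notin> set (snd W)"
    then have "chi W e = 0" by (simp add: chi_def count_list_0_iff)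
    then have "y e + z e = 0" using fun_cong[OF s(1), of e] by simp
    then show "y e = 0" using y0[of e] z0[of e] by simp
  qed
  obtain \<alpha> where a: "y = (\<lambda>e. \<alpha> * chi W e)" using circ_extreme[OF C y ys] by blast
  have "\<alpha> \<ge> 0"
  proof -
    have "\<alpha> * chi W (hd (snd W)) \<ge> 0" using y0 a by metis
    moreover have "chi W (hd (snd W)) > 0" using CAW_hd[OF cw] by simp
    ultimately show ?thesis by (simp add: zero_le_mult_iff)
  qed
  then have "y = (\<lambda>e. (\<alpha> / t) * (t * chi W e))" "\<alpha> / t \<ge> 0" using a t by auto
  then show ?thesis unfolding ray_def by blast
qed

lemma part1: "spans_extreme_ray (alt_cone V E ends col) x \<longleftrightarrow>
    (\<exists>W t. (alt_cycle V E ends col W \<or> alt_bicycle V E ends col W) \<and> t > 0 \<and> x = (\<lambda>e. t * chi W e))"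
proof
  assume ext: "spans_extreme_ray (alt_cone V E ends col) x"
  have x: "x \<in> alt_cone V E ends col" and xnz: "x \<noteq> (\<lambda>e. 0)"
    and ex: "\<And>y z. y \<in> alt_cone V E ends col \<Longrightarrow> z \<in> alt_cone V E ends col \<Longrightarrow> (\<lambda>e. y e + z e) \<in> ray x \<Longrightarrow> y \<in> ray x \<and> z \<in> ray x"
    using ext unfolding spans_extreme_ray_def by auto
  define H where "H = {e\<in>E. x e > 0}"
  have x0: "\<forall>e\<in>E. 0 \<le> x e" "\<forall>e. e \<notin> E \<longrightarrow> x e = 0" using x unfolding cone_iff by auto
  have Hne: "H \<noteq> {}"
  proof
    assume "H = {}"
    then have "x e = 0" for e using x0 unfolding H_def by (cases "e \<in> E") force+
    then show False using xnz by auto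
  qed
  obtain C where C: "alt_cycle V E ends col C \<or> alt_bicycle V E ends col C" and CH: "set (snd C) \<subseteq> H"
    using exists_circuit[OF both_support[OF x] _ Hne[unfolded H_def]] unfolding H_def by blast
  have cw: "CAW V E ends col C" by (rule circ_CAW[OF C])
  have cK: "chi C \<in> alt_cone V E ends col" by (rule CAW_cone[OF cw])
  define L where "L = length (snd C)"
  have L0: "L > 0" using cw unfolding CAW_def L_def by auto
  define m where "m = Min (x ` set (snd C))"
  have fin: "finite (x ` set (snd C))" "x ` set (snd C) \<noteq> {}" using cw unfolding CAW_def by auto
  have m0: "m > 0" unfolding m_def using fin CH unfolding H_def by (auto simp: Min_gr_iff)
  have mle: "m \<le> x e" if "e \<in> set (snd C)" for e unfolding m_def using fin that by auto
  define \<epsilon> where "\<epsilon> = m / real L"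
  have e0: "\<epsilon> > 0" unfolding \<epsilon>_def using m0 L0 by simp
  define z where "z = (\<lambda>e. \<epsilon> * chi C e)"
  define y where "y = (\<lambda>e. x e - z e)"
  have zK: "z \<in> alt_cone V E ends col" unfolding z_def by (rule cone_scale[OF cK]) (use e0 in simp)
  have yle: "z e \<le> x e" if "e \<in> E" for e
  proof (cases "e \<in> set (snd C)")
    case True
    have "chi C e \<le> real L" unfolding chi_def L_def using count_le_length by simp
    then have "z e \<le> \<epsilon> * real L" unfolding z_def using e0 by (simp add: mult_left_mono)
    also have "\<dots> = m" unfolding \<epsilon>_def using L0 by simp
    finally show ?thesis using mle[OF True] by simp
  next
    case False
    then have "z e = 0" unfolding z_def by (simp add: chi_def count_list_0_iff)
    then show ?thesis using x0 that by simp
  qed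
  have yK: "y \<in> alt_cone V E ends col"
    using x zK yle unfolding cone_iff y_def by (auto simp: bal_diff)
  have "(\<lambda>e. y e + z e) = (\<lambda>e. 1 * x e)" unfolding y_def by simp
  then have "(\<lambda>e. y e + z e) \<in> ray x" unfolding ray_def by (metis (mono_tags) mem_Collect_eq zero_le_one)
  then have "z \<in> ray x" using ex[OF yK zK] by blast
  then obtain t where t: "z = (\<lambda>e. t * x e)" "t \<ge> 0" unfolding ray_def by blast
  have "z (hd (snd C)) > 0" unfolding z_def using CAW_hd[OF cw] e0 by (simp add: less_le_trans)
  then have tp: "t > 0" using t by (metis less_eq_real_def mult_zero_left)
  have "x = (\<lambda>e. (\<epsilon> / t) * chi C e)"
  proof
    fix e
    have "t * x e = \<epsilon> * chi C e" using fun_cong[OF t(1), of e] unfolding z_def by simp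
    then show "x e = \<epsilon> / t * chi C e" using tp by (simp add: field_simps)
  qed
  then show "\<exists>W t. (alt_cycle V E ends col W \<or> alt_bicycle V E ends col W) \<and> t > 0 \<and> x = (\<lambda>e. t * chi W e)"
    using C e0 tp by (intro exI[of _ C] exI[of _ "\<epsilon> / t"]) auto
next
  assume "\<exists>W t. (alt_cycle V E ends col W \<or> alt_bicycle V E ends col W) \<and> t > 0 \<and> x = (\<lambda>e. t * chi W e)"
  then obtain W t where C: "alt_cycle V E ends col W \<or> alt_bicycle V E ends col W" and t: "t > 0"
    and xd: "x = (\<lambda>e. t * chi W e)" by blast
  have cw: "CAW V E ends col W" by (rule circ_CAW[OF C])
  have xK: "x \<in> alt_cone V E ends col" unfolding xd by (rule cone_scale[OF CAW_cone[OF cw]]) (use t in simp)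
  have "x (hd (snd W)) > 0" unfolding xd using CAW_hd[OF cw] t by (simp add: less_le_trans)
  then have xnz: "x \<noteq> (\<lambda>e. 0)" by auto
  have "y \<in> ray x \<and> z \<in> ray x" if yz: "y \<in> alt_cone V E ends col" "z \<in> alt_cone V E ends col" "(\<lambda>e. y e + z e) \<in> ray x" for y z
  proof -
    obtain s where s: "(\<lambda>e. y e + z e) = (\<lambda>e. s * x e)" "s \<ge> 0" using yz(3) unfolding ray_def by blast
    have s1: "(\<lambda>e. y e + z e) = (\<lambda>e. s * (t * chi W e))" using s(1) unfolding xd .
    have s2: "(\<lambda>e. z e + y e) = (\<lambda>e. s * (t * chi W e))" using s1 by (simp add: add.commute)
    show ?thesis using sub_ray[OF C t yz(1) yz(2) s1 s(2)] sub_ray[OF C t yz(2) yz(1) s2 s(2)] unfolding xd by simp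
  qed
  then show "spans_extreme_ray (alt_cone V E ends col) x" unfolding spans_extreme_ray_def using xK xnz by blast
qed

end

theorem theorem2p2:
  fixes V :: "'v set" and E :: "'e set" and ends :: "'e \<Rightarrow> 'v set" and col :: "'e \<Rightarrow> color"
  assumes "two_colored_graph V E ends col"
  shows "(\<forall>x. spans_extreme_ray (alt_cone V E ends col) x \<longleftrightarrow>
            (\<exists>W t. (alt_cycle V E ends col W \<or> alt_bicycle V E ends col W) \<and> t > 0 \<and>
                   x = (\<lambda>e. t * chi W e)))
       \<and> (\<forall>x \<in> alt_cone V E ends col. (\<forall>e. x e \<in> \<int>) \<longrightarrow>
            (\<exists>Ws. (\<forall>W\<in>set Ws. irreducible_CAW V E ends col W) \<and> x = (\<lambda>e. \<Sum>W\<leftarrow>Ws. chi W e)))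
       \<and> (\<forall>x \<in> alt_cone V E ends col. (\<forall>e. x e \<in> {0, 1}) \<longrightarrow>
            (\<exists>Ts. (\<forall>T\<in>set Ts. irreducible_CAT V E ends col T) \<and> x = (\<lambda>e. \<Sum>T\<leftarrow>Ts. chi T e)))
       \<and> (\<forall>W. irreducible_CAW V E ends col W \<longrightarrow> (\<forall>e. chi W e \<in> {0, 1, 2}))"
proof -
  interpret tcg V E ends col by (rule tcg.intro) (rule assms)
  show ?thesis using part1 part2 part3 irred_CAW_012 by blast
qed

end
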